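(* Suppose the Markov chain $\Xi$ on $\mathbb X\subseteq\mathbb R_+$ satisfies $(\mathrm T_{\alpha,\beta,c})$. Then for every $\nu$ with $\alpha-\beta<\nu<\alpha$, as $x\to\infty$, $$D_0(x)=\nu x^{\nu-1}\mathbb E_x[\theta]+c\nu x^{\nu-\alpha}\kappa_0(\nu)+o(x^{\nu-\alpha}),\qquad \kappa_0(\nu):=(1-\nu)\frac{\Gamma(\alpha-\nu)\Gamma(1-\alpha)}{\Gamma(2-\nu)}.$$
   Context: $\theta:=\xi_1-\xi_0$; $\mathbb P_x,\mathbb E_x$ refer to the chain started at $x$; $y_+:=y\mathbf 1\{y\ge0\}$, $y_-:=-y\mathbf 1\{y<0\}$. $f_0^\nu(x)=x^\nu$ for $x\ge1$, $=1$ for $0\le x<1$; $D_0(x):=\mathbb E[f_0^\nu(\xi_{n+1})-f_0^\nu(\xi_n)\mid\xi_n=x]$. $(\mathrm T_{\alpha,\beta,c})$: there exist $\alpha\in(1,2)$, $\beta>\alpha$, $c>0$, $x_0\in\mathbb R_+$ with $\lim_{y\to\infty}\sup_{x\ge x_0}|y^\alpha\mathbb P_x[\theta_+>y]-c|=0$ and $\sup_{x\ge x_0}\mathbb E_x[\theta_-^\beta]<\infty$. $\Gamma$ is the gamma function. *)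

theory Defs
  imports "HOL-Probability.Probability" "HOL-Library.Landau_Symbols"
begin

text \<open>One-step transition kernel K of the time-homogeneous Markov chain on
  the state space X: K x is the law of xi_1 under P_x. theta = xi_1 - xi_0,
  so under P_x, theta = z - x with z distributed as K x.\<close>

definition f0 :: "real \<Rightarrow> real \<Rightarrow> real" where
  "f0 \<nu> x = (if x \<ge> 1 then x powr \<nu> else 1)"

definition D0 :: "(real \<Rightarrow> real measure) \<Rightarrow> real \<Rightarrow> real \<Rightarrow> real" where
  "D0 K \<nu> x = (\<integral>z. f0 \<nu> z \<partial>K x) - f0 \<nu> x"

definition mean_incr :: "(real \<Rightarrow> real measure) \<Rightarrow> real \<Rightarrow> real" where
  "mean_incr K x = (\<integral>z. (z - x) \<partial>K x)"

definition kappa0 :: "real \<Rightarrow> real \<Rightarrow> real" where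
  "kappa0 \<alpha> \<nu> = (1 - \<nu>) * Gamma (\<alpha> - \<nu>) * Gamma (1 - \<alpha>) / Gamma (2 - \<nu>)"

text \<open>The uniform limit lim_{y\<rightarrow>\<infinity>} sup_{x\<ge>x0} |y^alpha P_x[theta_+ > y] - c| = 0
  is written out via epsilon; sup_{x\<ge>x0} E_x[theta_-^beta] < \<infinity> via an
  extended-nonnegative supremum.\<close>

definition cond_T :: "real set \<Rightarrow> (real \<Rightarrow> real measure) \<Rightarrow> real \<Rightarrow> real \<Rightarrow> real \<Rightarrow> real \<Rightarrow> bool" where
  "cond_T X K \<alpha> \<beta> c x0 \<longleftrightarrow>
     1 < \<alpha> \<and> \<alpha> < 2 \<and> \<beta> > \<alpha> \<and> c > 0 \<and> x0 \<ge> 0 \<and>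
     (\<forall>\<epsilon>>0. \<exists>Y. \<forall>y\<ge>Y. \<forall>x\<in>X. x \<ge> x0 \<longrightarrow>
        \<bar>y powr \<alpha> * measure (K x) {z. max (z - x) 0 > y} - c\<bar> \<le> \<epsilon>) \<and>
     (SUP x\<in>{x\<in>X. x \<ge> x0}. \<integral>\<^sup>+ z. ennreal ((max (x - z) 0) powr \<beta>) \<partial>K x) < \<infinity>"

end

theory Submission
  imports Defs
begin

definition GG :: "real \<Rightarrow> real \<Rightarrow> real \<Rightarrow> real" where
  "GG \<nu> x t = (x+t) powr \<nu> - x powr \<nu> - \<nu> * x powr (\<nu>-1) * t"
definition dG :: "real \<Rightarrow> real \<Rightarrow> real \<Rightarrow> real" where
  "dG \<nu> x y = \<nu> * ((x+y) powr (\<nu>-1) - x powr (\<nu>-1))"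
definition sg :: "real \<Rightarrow> real" where
  "sg \<nu> = (if \<nu>*(\<nu>-1) \<ge> 0 then 1 else -1)"

lemma PW:
  fixes a b p :: real
  assumes "0 < a" "a \<le> b" "p \<le> 1"
  shows "\<bar>b powr p - a powr p\<bar> \<le> \<bar>p\<bar> * a powr (p-1) * (b-a)"
proof (cases "a = b")
  case True then show ?thesis by simp
next
  case False
  then have ab: "a < b" using assms by simp
  have "\<And>w. a \<le> w \<Longrightarrow> w \<le> b \<Longrightarrow> ((\<lambda>w. w powr p) has_real_derivative p * w powr (p-1)) (at w)"
    using assms by (auto intro!: derivative_eq_intros)
  from MVT2[OF ab this] obtain z where z: "a < z" "z < b"
    "b powr p - a powr p = (b - a) * (p * z powr (p-1))" by blast
  have "z powr (p-1) \<le> a powr (p-1)" using z assms by (intro powr_mono2') auto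
  then have "\<bar>p\<bar> * z powr (p-1) \<le> \<bar>p\<bar> * a powr (p-1)" by (simp add: mult_left_mono)
  then have "\<bar>b powr p - a powr p\<bar> = (b-a) * (\<bar>p\<bar> * z powr (p-1))"
    using z ab by (simp add: abs_mult)
  also have "\<dots> \<le> (b-a) * (\<bar>p\<bar> * a powr (p-1))"
    by (rule mult_left_mono[OF \<open>\<bar>p\<bar> * z powr (p-1) \<le> _\<close>]) (use ab in simp)
  finally show ?thesis by (simp add: algebra_simps)
qed

lemma GG_deriv:
  assumes "x > 0" "y > -x"
  shows "(GG \<nu> x has_real_derivative dG \<nu> x y) (at y)"
  unfolding GG_def dG_def using assms
  by (auto intro!: derivative_eq_intros simp: algebra_simps)

lemma GG_0[simp]: "GG \<nu> x 0 = 0" by (simp add: GG_def)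

lemma dG_bound:
  assumes "x > 0" "y \<ge> 0" "\<nu> \<le> 2"
  shows "\<bar>dG \<nu> x y\<bar> \<le> \<bar>\<nu>\<bar>*\<bar>\<nu>-1\<bar>*x powr (\<nu>-2)*y"
proof -
  have "\<bar>(x+y) powr (\<nu>-1) - x powr (\<nu>-1)\<bar> \<le> \<bar>\<nu>-1\<bar> * x powr (\<nu>-1-1) * ((x+y) - x)"
    using assms by (intro PW) auto
  then have "\<bar>\<nu>\<bar> * \<bar>(x+y) powr (\<nu>-1) - x powr (\<nu>-1)\<bar> \<le> \<bar>\<nu>\<bar> * (\<bar>\<nu>-1\<bar> * x powr (\<nu>-2) * y)"
    by (intro mult_left_mono) (auto simp: algebra_simps)
  then show ?thesis by (simp add: dG_def abs_mult mult_ac)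
qed

lemma dG_sign:
  assumes "x > 0" "y \<ge> 0"
  shows "\<bar>dG \<nu> x y\<bar> = sg \<nu> * dG \<nu> x y"
proof -
  have A: "(x+y) powr (\<nu>-1) \<ge> x powr (\<nu>-1)" if "\<nu> \<ge> 1" using assms that by (intro powr_mono2) auto
  have B: "(x+y) powr (\<nu>-1) \<le> x powr (\<nu>-1)" if "\<nu> \<le> 1" using assms that by (intro powr_mono2') auto
  consider "\<nu> \<ge> 1" | "0 \<le> \<nu>" "\<nu> < 1" | "\<nu> < 0" by linarith
  then show ?thesis
  proof cases
    case 1
    have d: "(x+y) powr (\<nu>-1) - x powr (\<nu>-1) \<ge> 0" using A[OF 1] by simp
    have "dG \<nu> x y \<ge> 0" unfolding dG_def by (rule mult_nonneg_nonneg) (use 1 d in auto)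
    moreover have "\<nu>*(\<nu>-1) \<ge> 0" by (rule mult_nonneg_nonneg) (use 1 in auto)
    ultimately
    show ?thesis by (simp add: sg_def)
  next
    case 2
    have d: "(x+y) powr (\<nu>-1) - x powr (\<nu>-1) \<le> 0" using B 2 by simp
    have "dG \<nu> x y \<le> 0" unfolding dG_def by (rule mult_nonneg_nonpos) (use 2 d in auto)
    show ?thesis
    proof (cases "\<nu> = 0")
      case True then show ?thesis by (simp add: dG_def)
    next
      case False
      then have "\<nu>*(\<nu>-1) < 0" by (intro mult_pos_neg) (use 2 False in auto)
      then show ?thesis using \<open>dG \<nu> x y \<le> 0\<close> by (simp add: sg_def)
    qed
  next
    case 3
    have d: "(x+y) powr (\<nu>-1) - x powr (\<nu>-1) \<le> 0" using B 3 by simp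
    have "dG \<nu> x y \<ge> 0" unfolding dG_def by (rule mult_nonpos_nonpos) (use 3 d in auto)
    moreover have "\<nu>*(\<nu>-1) \<ge> 0" by (rule mult_nonpos_nonpos) (use 3 in auto)
    ultimately show ?thesis by (simp add: sg_def)
  qed
qed

lemma sg_abs: "\<bar>sg \<nu>\<bar> = 1" "sg \<nu> * sg \<nu> = 1" by (auto simp: sg_def)

lemma GG_int:
  assumes x: "x > 0" and t: "t \<ge> 0"
  shows "((\<lambda>y. \<bar>dG \<nu> x y\<bar>) has_integral \<bar>GG \<nu> x t\<bar>) {0..t}"
proof -
  have D: "(GG \<nu> x has_vector_derivative dG \<nu> x y) (at y within {0..t})" if "y \<in> {0..t}" for y
  proof -
    have "y > -x" using that x by auto
    from has_field_derivative_at_within[OF GG_deriv[OF x this]]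
    show ?thesis by (simp add: has_real_derivative_iff_has_vector_derivative)
  qed
  have "((dG \<nu> x) has_integral (GG \<nu> x t - GG \<nu> x 0)) {0..t}"
    by (rule fundamental_theorem_of_calculus[OF t D])
  then have I: "((dG \<nu> x) has_integral GG \<nu> x t) {0..t}" by simp
  then have "((\<lambda>y. sg \<nu> * dG \<nu> x y) has_integral sg \<nu> * GG \<nu> x t) {0..t}"
    by (rule has_integral_mult_right)
  moreover have "\<And>y. y \<in> {0..t} \<Longrightarrow> sg \<nu> * dG \<nu> x y = \<bar>dG \<nu> x y\<bar>"
    using dG_sign[OF x] by simp
  ultimately have I2: "((\<lambda>y. \<bar>dG \<nu> x y\<bar>) has_integral sg \<nu> * GG \<nu> x t) {0..t}"
    using has_integral_eq by metis
  then have nn: "sg \<nu> * GG \<nu> x t \<ge> 0"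
    by (rule has_integral_nonneg) simp
  have "sg \<nu> * GG \<nu> x t = \<bar>GG \<nu> x t\<bar>"
  proof (cases "\<nu>*(\<nu>-1) \<ge> 0")
    case True then show ?thesis using nn by (simp add: sg_def)
  next
    case False then show ?thesis using nn by (simp add: sg_def)
  qed
  then show ?thesis using I2 by simp
qed

lemma GG_sign:
  assumes "x > 0" "t \<ge> 0"
  shows "\<bar>GG \<nu> x t\<bar> = sg \<nu> * GG \<nu> x t"
proof -
  have D: "(GG \<nu> x has_vector_derivative dG \<nu> x y) (at y within {0..t})" if "y \<in> {0..t}" for y
  proof -
    have "y > -x" using that assms by auto
    from has_field_derivative_at_within[OF GG_deriv[OF assms(1) this]]
    show ?thesis by (simp add: has_real_derivative_iff_has_vector_derivative)
  qed
  have "((dG \<nu> x) has_integral (GG \<nu> x t - GG \<nu> x 0)) {0..t}"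
    by (rule fundamental_theorem_of_calculus[OF assms(2) D])
  then have "((\<lambda>y. sg \<nu> * dG \<nu> x y) has_integral sg \<nu> * GG \<nu> x t) {0..t}"
    by (intro has_integral_mult_right) simp
  then have "sg \<nu> * GG \<nu> x t \<ge> 0"
  proof (rule has_integral_nonneg)
    fix y assume "y \<in> {0..t}"
    then have y: "y \<ge> 0" by simp
    have "\<bar>dG \<nu> x y\<bar> = sg \<nu> * dG \<nu> x y" by (rule dG_sign[OF assms(1) y])
    then show "0 \<le> sg \<nu> * dG \<nu> x y" by (metis abs_ge_zero)
  qed
  then show ?thesis
    by (cases "\<nu>*(\<nu>-1) \<ge> 0") (simp_all add: sg_def)
qed

lemma dG_int:
  assumes x: "x > 0" and y: "y \<ge> 0"
  shows "((\<lambda>w. \<bar>\<nu>\<bar>*\<bar>\<nu>-1\<bar>*(x+w) powr (\<nu>-2)) has_integral \<bar>dG \<nu> x y\<bar>) {0..y}"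
proof -
  have D: "((\<lambda>w. \<nu>*(x+w) powr (\<nu>-1)) has_vector_derivative \<nu>*(\<nu>-1)*(x+w) powr (\<nu>-2)) (at w within {0..y})"
    if "w \<in> {0..y}" for w
  proof -
    have xw: "x + w > 0" using that x by auto
    have "((\<lambda>w. x + w) has_real_derivative 1) (at w)"
      by (rule derivative_eq_intros refl)+ simp
    from DERIV_powr[OF this xw DERIV_const[of "\<nu>-1"]]
    have "((\<lambda>w. (x+w) powr (\<nu>-1)) has_real_derivative (x+w) powr (\<nu>-1) * (0 * ln (x+w) + 1 * (\<nu>-1) / (x+w))) (at w)" .
    moreover have "(x+w) powr (\<nu>-1) * (0 * ln (x+w) + 1 * (\<nu>-1) / (x+w)) = (\<nu>-1)*(x+w) powr (\<nu>-2)"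
    proof -
      have "(x+w) powr (\<nu>-2) = (x+w) powr ((\<nu>-1)-1)" by simp
      also have "\<dots> = (x+w) powr (\<nu>-1) / (x+w) powr 1" by (rule powr_diff)
      also have "\<dots> = (x+w) powr (\<nu>-1) / (x+w)" using xw by simp
      finally have e1: "(x+w) powr (\<nu>-1) / (x+w) = (x+w) powr (\<nu>-2)" by simp
      have "(x+w) powr (\<nu>-1) * (0 * ln (x+w) + 1 * (\<nu>-1) / (x+w)) = (\<nu>-1) * ((x+w) powr (\<nu>-1) / (x+w))"
        by simp
      then show ?thesis by (simp only: e1)
    qed
    ultimately have "((\<lambda>w. (x+w) powr (\<nu>-1)) has_real_derivative (\<nu>-1)*(x+w) powr (\<nu>-2)) (at w)" by simp
    then have "((\<lambda>w. \<nu>*(x+w) powr (\<nu>-1)) has_real_derivative \<nu>*((\<nu>-1)*(x+w) powr (\<nu>-2))) (at w)"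
      by (rule DERIV_cmult)
    then show ?thesis
      by (simp add: has_real_derivative_iff_has_vector_derivative[symmetric] has_field_derivative_at_within mult.assoc)
  qed
  have "((\<lambda>w. \<nu>*(\<nu>-1)*(x+w) powr (\<nu>-2)) has_integral (\<nu>*(x+y) powr (\<nu>-1) - \<nu>*(x+0) powr (\<nu>-1))) {0..y}"
    by (rule fundamental_theorem_of_calculus[OF y D])
  then have I: "((\<lambda>w. \<nu>*(\<nu>-1)*(x+w) powr (\<nu>-2)) has_integral dG \<nu> x y) {0..y}"
    by (simp add: dG_def right_diff_distrib)
  then have I2: "((\<lambda>w. sg \<nu> * (\<nu>*(\<nu>-1)*(x+w) powr (\<nu>-2))) has_integral sg \<nu> * dG \<nu> x y) {0..y}"
    by (rule has_integral_mult_right)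
  have S: "sg \<nu> * (\<nu>*(\<nu>-1)) = \<bar>\<nu>\<bar>*\<bar>\<nu>-1\<bar>"
  proof (cases "\<nu>*(\<nu>-1) \<ge> 0")
    case True then show ?thesis by (simp add: sg_def abs_mult[symmetric])
  next
    case False then show ?thesis by (simp add: sg_def abs_mult[symmetric])
  qed
  have eqf: "(\<lambda>w. sg \<nu> * (\<nu>*(\<nu>-1)*(x+w) powr (\<nu>-2))) = (\<lambda>w. \<bar>\<nu>\<bar>*\<bar>\<nu>-1\<bar>*(x+w) powr (\<nu>-2))"
    by (rule ext) (metis S mult.assoc)
  have eqv: "sg \<nu> * dG \<nu> x y = \<bar>dG \<nu> x y\<bar>" using dG_sign[OF x y] by simp
  show ?thesis using I2 unfolding eqf eqv .
qed

lemma GG_neg_bound: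
  assumes x: "x > 0" and tl: "-x/2 \<le> t" and tu: "t \<le> 0" and nu: "\<nu> \<le> 2"
  shows "\<bar>GG \<nu> x t\<bar> \<le> \<bar>\<nu>\<bar>*\<bar>\<nu>-1\<bar>*(x/2) powr (\<nu>-2) * t^2"
proof (cases "t = 0")
  case True then show ?thesis by simp
next
  case False
  then have t: "t < 0" using tu by simp
  have "(GG \<nu> x has_real_derivative dG \<nu> x w) (at w)" if "t \<le> w" "w \<le> 0" for w
  proof (rule GG_deriv[OF x])
    show "w > -x" using that tl x by linarith
  qed
  from MVT2[OF t this] obtain w where w: "t < w" "w < 0"
    "GG \<nu> x 0 - GG \<nu> x t = (0 - t) * dG \<nu> x w" by blast
  have xw: "0 < x + w" "x + w \<le> x" "x/2 \<le> x + w" using w tl x by auto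
  have "\<bar>x powr (\<nu>-1) - (x+w) powr (\<nu>-1)\<bar> \<le> \<bar>\<nu>-1\<bar> * (x+w) powr (\<nu>-1-1) * (x - (x+w))"
    by (rule PW) (use xw nu in auto)
  also have "\<dots> = \<bar>\<nu>-1\<bar> * (x+w) powr (\<nu>-2) * (-w)" by simp
  also have "\<dots> \<le> \<bar>\<nu>-1\<bar> * (x/2) powr (\<nu>-2) * (-t)"
  proof -
    have p: "(x+w) powr (\<nu>-2) \<le> (x/2) powr (\<nu>-2)" by (rule powr_mono2') (use xw nu x in auto)
    have "\<bar>\<nu>-1\<bar> * (x+w) powr (\<nu>-2) \<le> \<bar>\<nu>-1\<bar> * (x/2) powr (\<nu>-2)"
      by (rule mult_left_mono[OF p]) simp
    moreover have "-w \<le> -t" using w by simp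
    ultimately show ?thesis
      by (rule mult_mono) (use w in auto)
  qed
  finally have 0: "\<bar>(x+w) powr (\<nu>-1) - x powr (\<nu>-1)\<bar> \<le> \<bar>\<nu>-1\<bar> * (x/2) powr (\<nu>-2) * (-t)"
    by (simp add: abs_minus_commute)
  have 1: "\<bar>dG \<nu> x w\<bar> \<le> \<bar>\<nu>\<bar> * (\<bar>\<nu>-1\<bar> * (x/2) powr (\<nu>-2) * (-t))"
    unfolding dG_def abs_mult by (rule mult_left_mono[OF 0]) simp
  have "\<bar>GG \<nu> x t\<bar> = (-t) * \<bar>dG \<nu> x w\<bar>" using w t by (simp add: abs_mult)
  also have "\<dots> \<le> (-t) * (\<bar>\<nu>\<bar> * (\<bar>\<nu>-1\<bar> * (x/2) powr (\<nu>-2) * (-t)))"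
    by (rule mult_left_mono[OF 1]) (use t in simp)
  also have "\<dots> = \<bar>\<nu>\<bar>*\<bar>\<nu>-1\<bar>*(x/2) powr (\<nu>-2) * t^2"
    by (simp add: power2_eq_square mult_ac)
  finally show ?thesis .
qed

lemma beta_sub:
  fixes x \<alpha> \<nu> :: real
  assumes x: "x > 0" and a1: "1 < \<alpha>" and a2: "\<alpha> < 2" and nu: "\<nu> < \<alpha>"
  shows "set_integrable lborel {0<..} (\<lambda>w. (x+w) powr (\<nu>-2) * w powr (1-\<alpha>))"
    "(LBINT w:{0<..}. (x+w) powr (\<nu>-2) * w powr (1-\<alpha>)) = x powr (\<nu>-\<alpha>) * Beta (2-\<alpha>) (\<alpha>-\<nu>)"
proof -
  define f where "f w = (x+w) powr (\<nu>-2) * w powr (1-\<alpha>)" for w :: real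
  define g where "g s = x * s / (1 - s)" for s :: real
  define g' where "g' s = x/(1-s)^2" for s :: real
  define bb where "bb s = s powr (1-\<alpha>) * (1-s) powr (\<alpha>-\<nu>-1)" for s :: real
  have key: "f (g s) * g' s = x powr (\<nu>-\<alpha>) * bb s" if "0 < s" "s < 1" for s
  proof -
    have u: "1 - s > 0" using that by simp
    have 1: "x + x * s / (1-s) = x/(1-s)" using u by (simp add: field_simps)
    have "f (g s) * g' s = (x/(1-s)) powr (\<nu>-2) * (x * s / (1-s)) powr (1-\<alpha>) * (x/(1-s)^2)"
      unfolding f_def g_def g'_def 1 by simp
    also have "\<dots> = (x powr (\<nu>-2) / (1-s) powr (\<nu>-2)) * ((x powr (1-\<alpha>) * s powr (1-\<alpha>)) / (1-s) powr (1-\<alpha>))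
                      * (x powr 1 / (1-s) powr 2)"
      using u x that by (simp add: powr_divide powr_mult powr_numeral)
    also have "\<dots> = (x powr (\<nu>-2) * x powr (1-\<alpha>) * x powr 1) * s powr (1-\<alpha>) *
                      ((1-s) powr (\<alpha>-\<nu>-1) / ((1-s) powr (\<nu>-2) * (1-s) powr (1-\<alpha>) * (1-s) powr 2 * (1-s) powr (\<alpha>-\<nu>-1)))"
      using u by (simp add: field_simps)
    also have "(1-s) powr (\<nu>-2) * (1-s) powr (1-\<alpha>) * (1-s) powr 2 * (1-s) powr (\<alpha>-\<nu>-1) = 1"
    proof -
      have "(1-s) powr (\<nu>-2) * (1-s) powr (1-\<alpha>) * (1-s) powr 2 * (1-s) powr (\<alpha>-\<nu>-1)
            = (1-s) powr ((\<nu>-2)+(1-\<alpha>)+2+(\<alpha>-\<nu>-1))" by (simp only: powr_add)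
      then show ?thesis using u by simp
    qed
    also have "x powr (\<nu>-2) * x powr (1-\<alpha>) * x powr 1 = x powr (\<nu>-\<alpha>)"
    proof -
      have "x powr (\<nu>-2) * x powr (1-\<alpha>) * x powr 1 = x powr ((\<nu>-2)+(1-\<alpha>)+1)" by (simp only: powr_add)
      then show ?thesis by simp
    qed
    finally show ?thesis by (simp add: bb_def)
  qed
  have sub: "set_integrable lborel (einterval 0 \<infinity>) f"
       "(LBINT x=0..\<infinity>. f x) = (LBINT s=0..1. f (g s) * g' s)"
  proof -
    have cf: "isCont f (g s)" if "0 < s" "s < 1" for s
    proof -
      have "g s > 0" using that x by (simp add: g_def)
      then show ?thesis unfolding f_def using x by (intro continuous_intros) auto
    qed
    have dg: "(g has_real_derivative g' s) (at s)" if "s < 1" for s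
      using that unfolding g_def g'_def
      by (auto intro!: derivative_eq_intros simp: field_simps power2_eq_square)
    have cg': "isCont g' s" if "s < 1" for s
      using that unfolding g'_def by (intro continuous_intros) auto
    have fnn: "0 \<le> f (g s)" if "0 < s" "s < 1" for s
      using that x by (simp add: f_def g_def)
    have A: "((ereal \<circ> g \<circ> real_of_ereal) \<longlongrightarrow> 0) (at_right 0)"
      unfolding zero_ereal_def ereal_tendsto_simps g_def
      by (auto intro!: tendsto_eq_intros)
    have B: "((ereal \<circ> g \<circ> real_of_ereal) \<longlongrightarrow> \<infinity>) (at_left 1)"
    proof -
      have ev: "eventually (\<lambda>s. s < 1) (at_left (1::real))"
        unfolding eventually_at_filter by (rule always_eventually) auto
      have "LIM s (at_left 1). (x * s) * inverse (1 - s) :> at_top"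
        by (rule filterlim_tendsto_pos_mult_at_top[OF _ x filterlim_inverse_at_top])
           (auto intro!: tendsto_eq_intros ev)
      then have "LIM s (at_left 1). g s :> at_top"
        by (simp add: g_def divide_inverse)
      then show ?thesis
        unfolding one_ereal_def comp_assoc[symmetric] ereal_tendsto_simps1 by (simp add: ereal_tendsto_simps2)
    qed
    have bbi0: "set_integrable lborel {0..1} bb"
      unfolding bb_def[abs_def] using integrable_Beta[of "2-\<alpha>" "\<alpha>-\<nu>"] a2 nu by auto
    have bbi: "set_integrable lborel {0<..<1} bb"
      by (rule set_integrable_subset[OF bbi0]) auto
    have ib: "set_integrable lborel (einterval 0 1) (\<lambda>s. f (g s) * g' s)"
    proof -
      have "set_integrable lborel {0<..<1} (\<lambda>s. x powr (\<nu>-\<alpha>) * bb s)"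
        using bbi by simp
      then show ?thesis
        unfolding zero_ereal_def one_ereal_def einterval_eq
        by (rule set_integrable_cong[THEN iffD1, rotated 3]) (auto simp: key)
    qed
    show "set_integrable lborel (einterval 0 \<infinity>) f"
         "(LBINT x=0..\<infinity>. f x) = (LBINT s=0..1. f (g s) * g' s)"
      using interval_integral_substitution_nonneg[of 0 1 g g' f 0 \<infinity>] cf dg cg' fnn A B ib x
      by (auto simp: g'_def zero_ereal_def one_ereal_def)
  qed
  show "set_integrable lborel {0<..} (\<lambda>w. (x+w) powr (\<nu>-2) * w powr (1-\<alpha>))"
    using sub(1) by (simp add: f_def[abs_def] zero_ereal_def)
  have bbi: "set_integrable lborel {0..1} bb"
    unfolding bb_def[abs_def] using integrable_Beta[of "2-\<alpha>" "\<alpha>-\<nu>"] a2 nu by (auto simp: bb_def)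
  have bbv: "(LBINT s=0..1. bb s) = Beta (2-\<alpha>) (\<alpha>-\<nu>)"
  proof -
    have "(LBINT s=0..1. bb s) = (LBINT s:{0..1}. bb s)"
      unfolding zero_ereal_def one_ereal_def by (rule interval_integral_Icc) simp
    also have "\<dots> = integral {0..1} bb" by (rule set_borel_integral_eq_integral(2)[OF bbi])
    also have "\<dots> = Beta (2-\<alpha>) (\<alpha>-\<nu>)"
      using has_integral_Beta_real[of "2-\<alpha>" "\<alpha>-\<nu>"] a2 nu by (auto simp: bb_def[abs_def] intro!: integral_unique)
    finally show ?thesis .
  qed
  have "(LBINT w:{0<..}. f w) = (LBINT x=0..\<infinity>. f x)"
    by (simp add: interval_lebesgue_integral_0_infty)
  also have "\<dots> = (LBINT s=0..1. f (g s) * g' s)" by (rule sub(2))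
  also have "\<dots> = (LBINT s=0..1. x powr (\<nu>-\<alpha>) * bb s)"
    by (rule interval_integral_cong) (auto simp: zero_ereal_def one_ereal_def key)
  also have "\<dots> = x powr (\<nu>-\<alpha>) * Beta (2-\<alpha>) (\<alpha>-\<nu>)"
    using bbv by simp
  finally show "(LBINT w:{0<..}. (x+w) powr (\<nu>-2) * w powr (1-\<alpha>)) = x powr (\<nu>-\<alpha>) * Beta (2-\<alpha>) (\<alpha>-\<nu>)"
    by (simp add: f_def)
qed

lemma powr_tail:
  fixes w \<alpha> :: real
  assumes "w > 0" "\<alpha> > 1"
  shows "(\<integral>\<^sup>+y. ennreal (y powr (-\<alpha>)) * indicator {w..} y \<partial>lborel) = ennreal (w powr (1-\<alpha>)/(\<alpha>-1))"
proof -
  have H: "((\<lambda>y. y powr (-\<alpha>)) has_integral -(w powr (-\<alpha>+1))/(-\<alpha>+1)) {w..}"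
    using assms by (intro has_integral_powr_to_inf) auto
  have "(\<integral>\<^sup>+y. ennreal (y powr (-\<alpha>)) * indicator {w..} y \<partial>lborel) = ennreal (-(w powr (-\<alpha>+1))/(-\<alpha>+1))"
    by (rule nn_integral_has_integral_lebesgue'[OF _ H]) auto
  also have "-(w powr (-\<alpha>+1))/(-\<alpha>+1) = w powr (1-\<alpha>)/(\<alpha>-1)"
    using assms by (simp add: field_simps)
  finally show ?thesis .
qed

lemma dG_nn:
  assumes "x > 0" "y \<ge> 0"
  shows "(\<integral>\<^sup>+w. ennreal (\<bar>\<nu>\<bar>*\<bar>\<nu>-1\<bar>*(x+w) powr (\<nu>-2)) * indicator {0..y} w \<partial>lborel) = ennreal \<bar>dG \<nu> x y\<bar>"
  using dG_int[OF assms, of \<nu>] assms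
  by (intro nn_integral_has_integral_lebesgue') auto

lemma MI:
  fixes x \<alpha> \<nu> :: real
  assumes x: "x > 0" and a1: "1 < \<alpha>" and a2: "\<alpha> < 2" and nu: "\<nu> < \<alpha>"
  shows "(\<integral>\<^sup>+y. ennreal (\<bar>dG \<nu> x y\<bar> * y powr (-\<alpha>)) * indicator {0<..} y \<partial>lborel)
       = ennreal (\<bar>\<nu>\<bar>*\<bar>\<nu>-1\<bar>/(\<alpha>-1) * (x powr (\<nu>-\<alpha>) * Beta (2-\<alpha>) (\<alpha>-\<nu>)))"
proof -
  define C where "C = \<bar>\<nu>\<bar>*\<bar>\<nu>-1\<bar>"
  have C0: "C \<ge> 0" by (simp add: C_def)
  define F where "F w y = ennreal (indicator {(w,y). 0 \<le> w \<and> w \<le> y \<and> 0 < y} (w,y) * (C * (x+w) powr (\<nu>-2)) * y powr (-\<alpha>))" for w y :: real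
  have "(\<integral>\<^sup>+y. ennreal (\<bar>dG \<nu> x y\<bar> * y powr (-\<alpha>)) * indicator {0<..} y \<partial>lborel)
      = (\<integral>\<^sup>+y. (\<integral>\<^sup>+w. F w y \<partial>lborel) \<partial>lborel)"
  proof (rule nn_integral_cong)
    fix y :: real
    show "ennreal (\<bar>dG \<nu> x y\<bar> * y powr (-\<alpha>)) * indicator {0<..} y = (\<integral>\<^sup>+w. F w y \<partial>lborel)"
    proof (cases "y > 0")
      case True
      have "(\<integral>\<^sup>+w. F w y \<partial>lborel) = (\<integral>\<^sup>+w. ennreal (C * (x+w) powr (\<nu>-2)) * indicator {0..y} w * ennreal (y powr (-\<alpha>)) \<partial>lborel)"
        using True x C0 by (intro nn_integral_cong) (auto simp: F_def indicator_def ennreal_mult')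
      also have "\<dots> = (\<integral>\<^sup>+w. ennreal (C * (x+w) powr (\<nu>-2)) * indicator {0..y} w \<partial>lborel) * ennreal (y powr (-\<alpha>))"
        by (rule nn_integral_multc) auto
      also have "\<dots> = ennreal \<bar>dG \<nu> x y\<bar> * ennreal (y powr (-\<alpha>))"
        using dG_nn[OF x, of y \<nu>] True by (simp add: C_def)
      finally show ?thesis using True by (simp add: ennreal_mult')
    next
      case False
      then show ?thesis by (simp add: F_def indicator_def)
    qed
  qed
  also have "\<dots> = (\<integral>\<^sup>+w. (\<integral>\<^sup>+y. F w y \<partial>lborel) \<partial>lborel)"
    unfolding F_def
    by (subst lborel_pair.Fubini')
       (auto simp: case_prod_unfold indicator_def cong: measurable_cong_sets)
  also have "\<dots> = (\<integral>\<^sup>+w. ennreal (C/(\<alpha>-1) * ((x+w) powr (\<nu>-2) * w powr (1-\<alpha>))) * indicator {0<..} w \<partial>lborel)"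
  proof (intro nn_integral_cong_AE eventually_mono[OF AE_lborel_singleton[of 0]])
    fix w :: real assume "w \<noteq> 0"
    show "(\<integral>\<^sup>+y. F w y \<partial>lborel) = ennreal (C/(\<alpha>-1) * ((x+w) powr (\<nu>-2) * w powr (1-\<alpha>))) * indicator {0<..} w"
    proof (cases "w > 0")
      case True
      have "(\<integral>\<^sup>+y. F w y \<partial>lborel) = (\<integral>\<^sup>+y. ennreal (C * (x+w) powr (\<nu>-2)) * (ennreal (y powr (-\<alpha>)) * indicator {w..} y) \<partial>lborel)"
        using True x C0 by (intro nn_integral_cong) (auto simp: F_def indicator_def ennreal_mult')
      also have "\<dots> = ennreal (C * (x+w) powr (\<nu>-2)) * (\<integral>\<^sup>+y. ennreal (y powr (-\<alpha>)) * indicator {w..} y \<partial>lborel)"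
        by (rule nn_integral_cmult) auto
      also have "\<dots> = ennreal (C * (x+w) powr (\<nu>-2)) * ennreal (w powr (1-\<alpha>)/(\<alpha>-1))"
        using powr_tail[OF True a1] by simp
      finally show ?thesis using True C0 a1 x
        by (simp add: ennreal_mult'[symmetric] field_simps)
    next
      case False
      then have "w < 0" using \<open>w \<noteq> 0\<close> by simp
      then show ?thesis by (simp add: F_def indicator_def)
    qed
  qed
  also have "\<dots> = (\<integral>\<^sup>+w. ennreal (C/(\<alpha>-1)) * ennreal (indicator {0<..} w * ((x+w) powr (\<nu>-2) * w powr (1-\<alpha>))) \<partial>lborel)"
  proof (intro nn_integral_cong)
    fix w :: real
    show "ennreal (C/(\<alpha>-1) * ((x+w) powr (\<nu>-2) * w powr (1-\<alpha>))) * indicator {0<..} w =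
          ennreal (C/(\<alpha>-1)) * ennreal (indicator {0<..} w * ((x+w) powr (\<nu>-2) * w powr (1-\<alpha>)))"
    proof (cases "w > 0")
      case True
      have "ennreal (C/(\<alpha>-1) * ((x+w) powr (\<nu>-2) * w powr (1-\<alpha>))) =
            ennreal (C/(\<alpha>-1)) * ennreal ((x+w) powr (\<nu>-2) * w powr (1-\<alpha>))"
        using C0 a1 by (intro ennreal_mult) auto
      then show ?thesis using True by simp
    qed simp
  qed
  also have "\<dots> = ennreal (C/(\<alpha>-1)) * (\<integral>\<^sup>+w. ennreal (indicator {0<..} w * ((x+w) powr (\<nu>-2) * w powr (1-\<alpha>))) \<partial>lborel)"
    by (rule nn_integral_cmult) auto
  also have "(\<integral>\<^sup>+w. ennreal (indicator {0<..} w * ((x+w) powr (\<nu>-2) * w powr (1-\<alpha>))) \<partial>lborel)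
      = ennreal (LBINT w:{0<..}. (x+w) powr (\<nu>-2) * w powr (1-\<alpha>))"
  proof -
    have intg: "integrable lborel (\<lambda>w. indicator {0<..} w * ((x+w) powr (\<nu>-2) * w powr (1-\<alpha>)))"
      using beta_sub(1)[OF assms] by (simp add: set_integrable_def)
    have "(\<integral>\<^sup>+w. ennreal (indicator {0<..} w * ((x+w) powr (\<nu>-2) * w powr (1-\<alpha>))) \<partial>lborel)
        = ennreal (\<integral>w. indicator {0<..} w * ((x+w) powr (\<nu>-2) * w powr (1-\<alpha>)) \<partial>lborel)"
      by (rule nn_integral_eq_integral[OF intg]) (simp add: indicator_def)
    then show ?thesis by (simp add: set_lebesgue_integral_def)
  qed
  also have "\<dots> = ennreal (x powr (\<nu>-\<alpha>) * Beta (2-\<alpha>) (\<alpha>-\<nu>))"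
    using beta_sub(2)[OF assms] by simp
  finally show ?thesis using C0 a1 by (simp add: C_def ennreal_mult'[symmetric])
qed

lemma layer_cake:
  fixes M :: "real measure" and T \<phi> :: "real \<Rightarrow> real"
  assumes sets: "sets M = sets borel" and P: "prob_space M"
    and Tm: "T \<in> borel_measurable borel" and \<phi>m: "\<phi> \<in> borel_measurable borel"
  shows "(\<integral>\<^sup>+z. (\<integral>\<^sup>+y. ennreal (\<phi> y) * indicator {0<..<T z} y \<partial>lborel) \<partial>M)
       = (\<integral>\<^sup>+y. ennreal (\<phi> y) * indicator {0<..} y * emeasure M {z. y < T z} \<partial>lborel)"
proof -
  interpret prob_space M by (fact P)
  have sf: "sigma_finite_measure M" by unfold_locales
  interpret pair_sigma_finite M lborel
    by (intro pair_sigma_finite.intro sf lborel.sigma_finite_measure_axioms)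
  have SP: "sets (M \<Otimes>\<^sub>M lborel) = sets (borel \<Otimes>\<^sub>M borel)"
    by (intro sets_pair_measure_cong sets) simp
  have mT: "(\<lambda>p::real\<times>real. T (fst p)) \<in> borel_measurable (borel \<Otimes>\<^sub>M borel)"
    using Tm by measurable
  have mS: "{p::real\<times>real. snd p < T (fst p)} \<in> sets (borel \<Otimes>\<^sub>M borel)"
  proof -
    have "{p \<in> space (borel \<Otimes>\<^sub>M borel). snd p < T (fst p)} \<in> sets (borel \<Otimes>\<^sub>M borel)"
      using mT by measurable
    then show ?thesis by (simp add: space_pair_measure)
  qed
  have meas: "(\<lambda>p::real\<times>real. ennreal (\<phi> (snd p)) * indicator {0<..} (snd p) * indicator {p. snd p < T (fst p)} p)
      \<in> borel_measurable (M \<Otimes>\<^sub>M lborel)"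
    unfolding measurable_cong_sets[OF SP refl]
    using \<phi>m mS by measurable
  have "(\<integral>\<^sup>+z. (\<integral>\<^sup>+y. ennreal (\<phi> y) * indicator {0<..<T z} y \<partial>lborel) \<partial>M)
      = (\<integral>\<^sup>+z. (\<integral>\<^sup>+y. ennreal (\<phi> (snd (z,y))) * indicator {0<..} (snd (z,y)) * indicator {p. snd p < T (fst p)} (z,y) \<partial>lborel) \<partial>M)"
    by (intro nn_integral_cong) (simp add: indicator_def)
  also have "\<dots> = (\<integral>\<^sup>+y. (\<integral>\<^sup>+z. ennreal (\<phi> (snd (z,y))) * indicator {0<..} (snd (z,y)) * indicator {p. snd p < T (fst p)} (z,y) \<partial>M) \<partial>lborel)"
    by (rule Fubini'[symmetric]) (use meas in \<open>simp add: case_prod_unfold\<close>)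
  also have "\<dots> = (\<integral>\<^sup>+y. ennreal (\<phi> y) * indicator {0<..} y * emeasure M {z. y < T z} \<partial>lborel)"
  proof (rule nn_integral_cong)
    fix y :: real
    have S: "{z. y < T z} \<in> sets M"
    proof -
      have "{z \<in> space borel. y < T z} \<in> sets borel" using Tm by measurable
      then show ?thesis using sets by simp
    qed
    have "(\<integral>\<^sup>+z. ennreal (\<phi> (snd (z,y))) * indicator {0<..} (snd (z,y)) * indicator {p. snd p < T (fst p)} (z,y) \<partial>M)
        = (\<integral>\<^sup>+z. (ennreal (\<phi> y) * indicator {0<..} y) * indicator {z. y < T z} z \<partial>M)"
      by (intro nn_integral_cong) (simp add: indicator_def)
    also have "\<dots> = ennreal (\<phi> y) * indicator {0<..} y * emeasure M {z. y < T z}"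
      by (rule nn_integral_cmult_indicator[OF S])
    finally show "(\<integral>\<^sup>+z. ennreal (\<phi> (snd (z,y))) * indicator {0<..} (snd (z,y)) * indicator {p. snd p < T (fst p)} (z,y) \<partial>M)
        = ennreal (\<phi> y) * indicator {0<..} y * emeasure M {z. y < T z}" .
  qed
  finally show ?thesis .
qed

lemma pow_le_1_plus:
  fixes s \<gamma> \<beta> :: real
  assumes "s \<ge> 0" "0 \<le> \<gamma>" "\<gamma> \<le> \<beta>"
  shows "s powr \<gamma> \<le> 1 + s powr \<beta>"
proof (cases "s \<le> 1")
  case True
  then have "s powr \<gamma> \<le> 1"
    using assms by (cases "s = 0") (auto intro: powr_le1)
  then show ?thesis by (smt (verit) powr_ge_zero)
next
  case False
  then have "s powr \<gamma> \<le> s powr \<beta>" using assms by (intro powr_mono) auto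
  then show ?thesis by simp
qed

lemma Hn_bound:
  fixes x z \<nu> \<beta> \<gamma> :: real
  assumes x: "x \<ge> 2" and z: "0 \<le> z" "z < x" and nu: "\<nu> \<le> 2"
    and g: "\<gamma> = min \<beta> 2" and b: "\<beta> > 0"
  shows "\<bar>f0 \<nu> z - x powr \<nu> - \<nu> * x powr (\<nu>-1) * (z - x)\<bar>
     \<le> (\<bar>\<nu>\<bar>*\<bar>\<nu>-1\<bar>*2 powr (2-\<nu>) + 2 powr \<beta> * (3 + \<bar>\<nu>\<bar>))
        * (x powr (\<nu>-\<gamma>) + x powr (-\<beta>) + x powr (\<nu>-\<beta>)) * (1 + (x-z) powr \<beta>)"
    (is "?L \<le> (?C1 + ?C2) * ?Q * ?R")
proof -
  have x0: "x > 0" using x by simp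
  have g0: "0 \<le> \<gamma>" "\<gamma> \<le> \<beta>" "\<gamma> \<le> 2" using g b by auto
  have Q0: "x powr (\<nu>-\<gamma>) \<ge> 0" "x powr (-\<beta>) \<ge> 0" "x powr (\<nu>-\<beta>) \<ge> 0" by auto
  have R1: "?R \<ge> 1" by simp
  have C10: "?C1 \<ge> 0" and C20: "?C2 \<ge> 0" by auto
  have main: "?L \<le> ?C1 * ?Q * ?R \<or> ?L \<le> ?C2 * ?Q * ?R"
  proof (cases "z \<ge> x/2")
    case True
    define t where "t = z - x"
    have t: "-x/2 \<le> t" "t \<le> 0" using True z by (auto simp: t_def)
    have f0z: "f0 \<nu> z = (x + t) powr \<nu>" using True x by (simp add: f0_def t_def)
    have L: "?L = \<bar>GG \<nu> x t\<bar>" by (simp add: f0z GG_def t_def)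
    have b1: "\<bar>GG \<nu> x t\<bar> \<le> \<bar>\<nu>\<bar>*\<bar>\<nu>-1\<bar>*(x/2) powr (\<nu>-2) * t^2"
      by (rule GG_neg_bound) (use x0 t nu in auto)
    have b2: "(x/2) powr (\<nu>-2) = 2 powr (2-\<nu>) * x powr (\<nu>-2)"
    proof -
      have "(x/2) powr (\<nu>-2) = x powr (\<nu>-2) / 2 powr (\<nu>-2)" by (rule powr_divide)
      also have "1 / 2 powr (\<nu>-2) = 2 powr (2-\<nu>)" by (subst powr_minus_divide[symmetric]) simp
      then have "x powr (\<nu>-2) / 2 powr (\<nu>-2) = 2 powr (2-\<nu>) * x powr (\<nu>-2)"
        by (metis times_divide_eq_right mult.commute mult.right_neutral)
      finally show ?thesis .
    qed
    have b3: "t^2 \<le> (-t) powr \<gamma> * x powr (2-\<gamma>)"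
    proof (cases "t = 0")
      case True then show ?thesis by simp
    next
      case False
      then have tp: "-t > 0" using t by simp
      have "t^2 = (-t) powr 2" using tp by (simp add: powr_numeral)
      also have "\<dots> = (-t) powr \<gamma> * (-t) powr (2-\<gamma>)" using tp by (simp add: powr_add[symmetric])
      finally have e: "t^2 = (-t) powr \<gamma> * (-t) powr (2-\<gamma>)" .
      have "(-t) powr (2-\<gamma>) \<le> x powr (2-\<gamma>)" using tp t g0 x0 by (intro powr_mono2) auto
      then have "(-t) powr \<gamma> * (-t) powr (2-\<gamma>) \<le> (-t) powr \<gamma> * x powr (2-\<gamma>)"
        by (rule mult_left_mono) simp
      then show ?thesis using e by simp
    qed
    have b4: "(-t) powr \<gamma> \<le> ?R"
    proof -
      have "(-t) powr \<gamma> \<le> 1 + (-t) powr \<beta>" using t g0 by (intro pow_le_1_plus) auto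
      then show ?thesis by (simp add: t_def)
    qed
    have "(-t) powr \<gamma> * x powr (2-\<gamma>) \<le> ?R * x powr (2-\<gamma>)"
      by (rule mult_right_mono[OF b4]) simp
    with b3 have b5: "t^2 \<le> ?R * x powr (2-\<gamma>)" by linarith
    have K0: "\<bar>\<nu>\<bar>*\<bar>\<nu>-1\<bar>*(x/2) powr (\<nu>-2) \<ge> 0" by simp
    have "\<bar>\<nu>\<bar>*\<bar>\<nu>-1\<bar>*(x/2) powr (\<nu>-2) * t^2 \<le> \<bar>\<nu>\<bar>*\<bar>\<nu>-1\<bar>*(x/2) powr (\<nu>-2) * (?R * x powr (2-\<gamma>))"
      by (rule mult_left_mono[OF b5 K0])
    also have "\<dots> = ?C1 * (x powr (\<nu>-2) * x powr (2-\<gamma>)) * ?R" unfolding b2 by (simp add: mult_ac)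
    also have "x powr (\<nu>-2) * x powr (2-\<gamma>) = x powr (\<nu>-\<gamma>)"
      by (simp add: powr_add[symmetric])
    finally have b6: "?L \<le> ?C1 * x powr (\<nu>-\<gamma>) * ?R" using b1 L by linarith
    have "?C1 * x powr (\<nu>-\<gamma>) * ?R \<le> ?C1 * ?Q * ?R"
    proof -
      have "x powr (\<nu>-\<gamma>) \<le> ?Q" using Q0 by simp
      then have "?C1 * x powr (\<nu>-\<gamma>) \<le> ?C1 * ?Q" by (rule mult_left_mono) (rule C10)
      then show ?thesis by (rule mult_right_mono) (use R1 in simp)
    qed
    with b6 have "?L \<le> ?C1 * ?Q * ?R" by linarith
    then show ?thesis by blast
  next
    case False
    then have zx: "z < x/2" by simp
    have f0b: "\<bar>f0 \<nu> z\<bar> \<le> 1 + x powr \<nu>"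
    proof (cases "z \<ge> 1")
      case True
      then have "f0 \<nu> z = z powr \<nu>" by (simp add: f0_def)
      moreover have "z powr \<nu> \<le> 1 + x powr \<nu>"
      proof (cases "\<nu> \<ge> 0")
        case True
        then have "z powr \<nu> \<le> x powr \<nu>" using z \<open>z \<ge> 1\<close> by (intro powr_mono2) auto
        then show ?thesis by simp
      next
        case False
        then have "z powr \<nu> \<le> z powr 0" using \<open>z \<ge> 1\<close> by (intro powr_mono) auto
        then have "z powr \<nu> \<le> 1" using \<open>z \<ge> 1\<close> by simp
        then show ?thesis by (smt (verit) powr_ge_zero)
      qed
      ultimately show ?thesis by simp
    next
      case False
      then show ?thesis by (simp add: f0_def)
    qed
    have e: "x powr (\<nu>-1) * x = x powr \<nu>"
    proof -
      have "x powr \<nu> = x powr ((\<nu>-1)+1)" by simp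
      also have "\<dots> = x powr (\<nu>-1) * x powr 1" by (rule powr_add)
      finally show ?thesis using x0 by simp
    qed
    have ab: "\<bar>\<nu> * x powr (\<nu>-1) * (z - x)\<bar> = \<bar>\<nu>\<bar> * x powr (\<nu>-1) * (x - z)"
      using z by (simp add: abs_mult)
    have "\<bar>\<nu>\<bar> * x powr (\<nu>-1) * (x - z) \<le> \<bar>\<nu>\<bar> * x powr (\<nu>-1) * x"
      by (rule mult_left_mono) (use z in auto)
    then have lin: "\<bar>\<nu> * x powr (\<nu>-1) * (z - x)\<bar> \<le> \<bar>\<nu>\<bar> * x powr \<nu>"
      unfolding ab using e by (simp add: mult.assoc)
    have L1: "?L \<le> 1 + (2 + \<bar>\<nu>\<bar>) * x powr \<nu>"
    proof -
      have tri: "\<And>a b c::real. b \<ge> 0 \<Longrightarrow> \<bar>a - b - c\<bar> \<le> \<bar>a\<bar> + b + \<bar>c\<bar>" by arith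
      have "?L \<le> \<bar>f0 \<nu> z\<bar> + x powr \<nu> + \<bar>\<nu> * x powr (\<nu>-1) * (z - x)\<bar>" by (rule tri) simp
      then show ?thesis using f0b lin by (simp add: algebra_simps)
    qed
    have one: "1 \<le> 2 powr \<beta> * x powr (-\<beta>) * (x-z) powr \<beta>"
    proof -
      have "(x/2) powr \<beta> \<le> (x-z) powr \<beta>" using zx x0 b by (intro powr_mono2) auto
      moreover have "(x/2) powr \<beta> = x powr \<beta> / 2 powr \<beta>" using x0 by (simp add: powr_divide)
      ultimately have "x powr \<beta> \<le> 2 powr \<beta> * (x-z) powr \<beta>" by (simp add: field_simps)
      then have "x powr \<beta> * x powr (-\<beta>) \<le> 2 powr \<beta> * (x-z) powr \<beta> * x powr (-\<beta>)"
        by (intro mult_right_mono) auto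
      moreover have "x powr \<beta> * x powr (-\<beta>) = 1" using x0 by (simp add: powr_add[symmetric])
      ultimately show ?thesis by (simp add: mult_ac)
    qed
    have "?L \<le> (1 + (2 + \<bar>\<nu>\<bar>) * x powr \<nu>) * (2 powr \<beta> * x powr (-\<beta>) * (x-z) powr \<beta>)"
    proof -
      have A0: "1 + (2 + \<bar>\<nu>\<bar>) * x powr \<nu> \<ge> 0" by (simp add: add_nonneg_nonneg)
      have "(1 + (2 + \<bar>\<nu>\<bar>) * x powr \<nu>) * 1 \<le> (1 + (2 + \<bar>\<nu>\<bar>) * x powr \<nu>) * (2 powr \<beta> * x powr (-\<beta>) * (x-z) powr \<beta>)"
        by (rule mult_left_mono[OF one A0])
      then show ?thesis using L1 by simp
    qed
    also have "\<dots> = 2 powr \<beta> * (x powr (-\<beta>) + (2 + \<bar>\<nu>\<bar>) * (x powr \<nu> * x powr (-\<beta>))) * (x-z) powr \<beta>"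
      by (simp add: algebra_simps)
    also have "x powr \<nu> * x powr (-\<beta>) = x powr (\<nu>-\<beta>)" by (simp add: powr_add[symmetric])
    also have "2 powr \<beta> * (x powr (-\<beta>) + (2 + \<bar>\<nu>\<bar>) * x powr (\<nu>-\<beta>)) * (x-z) powr \<beta>
              \<le> ?C2 * ?Q * ?R"
    proof -
      have h1: "x powr (-\<beta>) \<le> (3 + \<bar>\<nu>\<bar>) * x powr (-\<beta>)"
        using mult_right_mono[of 1 "3 + \<bar>\<nu>\<bar>" "x powr (-\<beta>)"] by simp
      have h2: "(2 + \<bar>\<nu>\<bar>) * x powr (\<nu>-\<beta>) \<le> (3 + \<bar>\<nu>\<bar>) * x powr (\<nu>-\<beta>)"
        using mult_right_mono[of "2 + \<bar>\<nu>\<bar>" "3 + \<bar>\<nu>\<bar>" "x powr (\<nu>-\<beta>)"] by simp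
      have h3: "0 \<le> (3 + \<bar>\<nu>\<bar>) * x powr (\<nu>-\<gamma>)" by simp
      have h4: "(3 + \<bar>\<nu>\<bar>) * ?Q = (3 + \<bar>\<nu>\<bar>) * x powr (\<nu>-\<gamma>) + (3 + \<bar>\<nu>\<bar>) * x powr (-\<beta>) + (3 + \<bar>\<nu>\<bar>) * x powr (\<nu>-\<beta>)"
        by (simp add: distrib_left)
      have "x powr (-\<beta>) + (2 + \<bar>\<nu>\<bar>) * x powr (\<nu>-\<beta>) \<le> (3 + \<bar>\<nu>\<bar>) * ?Q"
        using h1 h2 h3 h4 by linarith
      then have s1: "2 powr \<beta> * (x powr (-\<beta>) + (2 + \<bar>\<nu>\<bar>) * x powr (\<nu>-\<beta>)) \<le> 2 powr \<beta> * ((3 + \<bar>\<nu>\<bar>) * ?Q)"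
        by (rule mult_left_mono) simp
      have s2: "(x-z) powr \<beta> \<le> ?R" by simp
      have s3: "0 \<le> 2 powr \<beta> * ((3 + \<bar>\<nu>\<bar>) * ?Q)" using Q0 by simp
      have "2 powr \<beta> * (x powr (-\<beta>) + (2 + \<bar>\<nu>\<bar>) * x powr (\<nu>-\<beta>)) * (x-z) powr \<beta>
            \<le> 2 powr \<beta> * ((3 + \<bar>\<nu>\<bar>) * ?Q) * ?R"
        by (rule mult_mono[OF s1 s2 s3]) simp
      then show ?thesis by (simp add: mult_ac)
    qed
    finally show ?thesis by blast
  qed
  have "?C1 * ?Q * ?R \<le> (?C1 + ?C2) * ?Q * ?R" "?C2 * ?Q * ?R \<le> (?C1 + ?C2) * ?Q * ?R"
    using C10 C20 Q0 R1 by (intro mult_right_mono; simp)+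
  then show ?thesis using main by linarith
qed

lemma sg_prod: "sg \<nu> * (\<bar>\<nu>\<bar>*\<bar>\<nu>-1\<bar>) = \<nu>*(\<nu>-1)"
proof (cases "\<nu>*(\<nu>-1) \<ge> 0")
  case True then show ?thesis by (simp add: sg_def abs_mult[symmetric])
next
  case False then show ?thesis by (simp add: sg_def abs_mult[symmetric])
qed

lemma kappa_ident:
  fixes \<alpha> \<nu> X :: real
  assumes a1: "1 < \<alpha>" and a2: "\<alpha> < 2" and nu: "\<nu> < \<alpha>"
  shows "sg \<nu> * (\<bar>\<nu>\<bar>*\<bar>\<nu>-1\<bar>/(\<alpha>-1) * (X * Beta (2-\<alpha>) (\<alpha>-\<nu>))) = \<nu> * X * kappa0 \<alpha> \<nu>"
proof -
  have ni: "1 - \<alpha> \<notin> \<int>\<^sub>\<le>\<^sub>0"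
  proof
    assume "1 - \<alpha> \<in> \<int>\<^sub>\<le>\<^sub>0"
    then obtain n :: int where n: "1 - \<alpha> = of_int n" "n \<le> 0" by (auto elim!: nonpos_Ints_cases)
    have "of_int n > (-1::real)" "of_int n < (0::real)" using n a1 a2 by linarith+
    then have "n > -1" "n < 0" by linarith+
    then show False by linarith
  qed
  have G: "Gamma (2-\<alpha>) = (1-\<alpha>) * Gamma (1-\<alpha>)"
    using Gamma_plus1[OF ni] by (simp add: algebra_simps)
  have B: "Beta (2-\<alpha>) (\<alpha>-\<nu>) = Gamma (2-\<alpha>) * Gamma (\<alpha>-\<nu>) / Gamma (2-\<nu>)"
    unfolding Beta_def by simp
  have S: "sg \<nu> * (\<bar>\<nu>\<bar>*\<bar>\<nu>-1\<bar>) = \<nu>*(\<nu>-1)" by (rule sg_prod)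
  have "sg \<nu> * (\<bar>\<nu>\<bar>*\<bar>\<nu>-1\<bar>/(\<alpha>-1) * (X * Beta (2-\<alpha>) (\<alpha>-\<nu>)))
      = (sg \<nu> * (\<bar>\<nu>\<bar>*\<bar>\<nu>-1\<bar>)) / (\<alpha>-1) * (X * Beta (2-\<alpha>) (\<alpha>-\<nu>))" by simp
  also have "\<dots> = \<nu>*(\<nu>-1) / (\<alpha>-1) * (X * ((1-\<alpha>) * Gamma (1-\<alpha>) * Gamma (\<alpha>-\<nu>) / Gamma (2-\<nu>)))"
    unfolding S B G ..
  also have "\<dots> = \<nu> * X * ((1 - \<nu>) * Gamma (\<alpha>-\<nu>) * Gamma (1-\<alpha>) / Gamma (2-\<nu>))"
  proof -
    have D: "Gamma (2-\<nu>) > 0" by (rule Gamma_real_pos) (use nu a2 in simp)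
    have a: "\<alpha> - 1 \<noteq> 0" using a1 by simp
    show ?thesis using D a by (simp add: field_simps)
  qed
  finally show ?thesis by (simp add: kappa0_def)
qed

context
  fixes M :: "real measure" and x \<alpha> \<beta> c \<nu> e Y Mb :: real
  assumes sets: "sets M = sets borel" and P: "prob_space M"
    and nonneg: "AE z in M. 0 \<le> z" and x2: "x \<ge> 2"
    and a1: "1 < \<alpha>" and a2: "\<alpha> < 2" and ab: "\<alpha> < \<beta>" and c0: "c > 0"
    and nulo: "\<alpha> - \<beta> < \<nu>" and nuhi: "\<nu> < \<alpha>" and Y0: "Y > 0" and e0: "e > 0"
    and tail: "\<And>y. y \<ge> Y \<Longrightarrow> \<bar>y powr \<alpha> * measure M {z. max (z - x) 0 > y} - c\<bar> \<le> e"
    and neg: "(\<integral>\<^sup>+z. ennreal ((max (x - z) 0) powr \<beta>) \<partial>M) \<le> ennreal Mb" and Mb0: "Mb \<ge> 0"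
begin

definition Pt where "Pt y = measure M {z. max (z - x) 0 > y}"

lemma spM: "space M = UNIV" using sets_eq_imp_space_eq[OF sets] by simp

lemma measM: "(f::real\<Rightarrow>real) \<in> borel_measurable borel \<Longrightarrow> f \<in> borel_measurable M"
  by (simp add: measurable_cong_sets[OF sets refl])

lemma setM: "{z. y < max (z - x) 0} \<in> sets M"
proof -
  have "{z \<in> space borel. y < max (z - x) 0} \<in> sets borel" by measurable
  then show ?thesis using sets by simp
qed

lemma Pt_em: "emeasure M {z. y < max (z - x) 0} = ennreal (Pt y)"
proof -
  interpret prob_space M by (rule P)
  show ?thesis by (simp add: Pt_def emeasure_eq_measure)
qed

lemma Pt_01: "0 \<le> Pt y" "Pt y \<le> 1"
proof -
  interpret prob_space M by (rule P)
  show "0 \<le> Pt y" by (simp add: Pt_def)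
  show "Pt y \<le> 1" by (simp add: Pt_def)
qed

lemma Pt_anti: "y1 \<le> y2 \<Longrightarrow> Pt y2 \<le> Pt y1"
proof -
  interpret prob_space M by (rule P)
  assume "y1 \<le> y2"
  then have "{z. y2 < max (z - x) 0} \<subseteq> {z. y1 < max (z - x) 0}" by auto
  then show ?thesis unfolding Pt_def by (intro finite_measure_mono setM)
qed

lemma Pt_meas: "Pt \<in> borel_measurable borel"
proof -
  have "mono (\<lambda>y. - Pt y)" by (auto simp: mono_def intro: Pt_anti)
  then have "(\<lambda>y. - Pt y) \<in> borel_measurable borel" by (rule borel_measurable_mono)
  then have "(\<lambda>y. - (- Pt y)) \<in> borel_measurable borel" by measurable
  then show ?thesis by simp
qed

lemma Pt_tail: "y \<ge> Y \<Longrightarrow> \<bar>Pt y - c * y powr (-\<alpha>)\<bar> \<le> e * y powr (-\<alpha>)"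
proof -
  assume y: "y \<ge> Y"
  then have yp: "y > 0" using Y0 by simp
  have t: "\<bar>y powr \<alpha> * Pt y - c\<bar> \<le> e" using tail[OF y] by (simp add: Pt_def)
  have i: "y powr (-\<alpha>) * y powr \<alpha> = 1" using yp by (simp add: powr_add[symmetric])
  have "Pt y - c * y powr (-\<alpha>) = y powr (-\<alpha>) * (y powr \<alpha> * Pt y - c)"
    using i by (simp add: algebra_simps)
  then have "\<bar>Pt y - c * y powr (-\<alpha>)\<bar> = y powr (-\<alpha>) * \<bar>y powr \<alpha> * Pt y - c\<bar>"
    by (simp add: abs_mult)
  also have "\<dots> \<le> y powr (-\<alpha>) * e" by (rule mult_left_mono[OF t]) simp
  finally show ?thesis by (simp add: mult.commute)
qed

lemma Pt_tail2: "y \<ge> Y \<Longrightarrow> Pt y \<le> (c + e) * y powr (-\<alpha>)"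
  using Pt_tail[of y] by (simp add: algebra_simps abs_le_iff)

lemma LC_Tp: "(\<integral>\<^sup>+z. ennreal (max (z - x) 0) \<partial>M) = (\<integral>\<^sup>+y. ennreal (Pt y) * indicator {0<..} y \<partial>lborel)"
proof -
  have "(\<integral>\<^sup>+z. (\<integral>\<^sup>+y. ennreal 1 * indicator {0<..<max (z - x) 0} y \<partial>lborel) \<partial>M)
      = (\<integral>\<^sup>+y. ennreal 1 * indicator {0<..} y * emeasure M {z. y < max (z - x) 0} \<partial>lborel)"
    by (rule layer_cake[OF sets P]) auto
  moreover have "(\<integral>\<^sup>+y. ennreal 1 * indicator {0<..<max (z - x) 0} y \<partial>lborel) = ennreal (max (z - x) 0)" for z
    by simp
  ultimately show ?thesis by (simp add: Pt_em mult.commute)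
qed

lemma GG_nn: "t \<ge> 0 \<Longrightarrow> (\<integral>\<^sup>+y. ennreal \<bar>dG \<nu> x y\<bar> * indicator {0<..<t} y \<partial>lborel) = ennreal \<bar>GG \<nu> x t\<bar>"
proof -
  assume t: "t \<ge> 0"
  have "((\<lambda>y. \<bar>dG \<nu> x y\<bar>) has_integral \<bar>GG \<nu> x t\<bar>) {0..t}"
    by (rule GG_int) (use x2 t in auto)
  then have "((\<lambda>y. \<bar>dG \<nu> x y\<bar>) has_integral \<bar>GG \<nu> x t\<bar>) {0<..<t}"
    by (simp add: has_integral_Icc_iff_Ioo)
  then show ?thesis by (rule nn_integral_has_integral_lebesgue'[rotated]) simp
qed

lemma dG_meas: "(\<lambda>y. \<bar>dG \<nu> x y\<bar>) \<in> borel_measurable borel"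
  unfolding dG_def by measurable

lemma LC_GG: "(\<integral>\<^sup>+z. ennreal \<bar>GG \<nu> x (max (z - x) 0)\<bar> \<partial>M)
   = (\<integral>\<^sup>+y. ennreal \<bar>dG \<nu> x y\<bar> * indicator {0<..} y * ennreal (Pt y) \<partial>lborel)"
proof -
  have "(\<integral>\<^sup>+z. (\<integral>\<^sup>+y. ennreal \<bar>dG \<nu> x y\<bar> * indicator {0<..<max (z - x) 0} y \<partial>lborel) \<partial>M)
      = (\<integral>\<^sup>+y. ennreal \<bar>dG \<nu> x y\<bar> * indicator {0<..} y * emeasure M {z. y < max (z - x) 0} \<partial>lborel)"
    by (rule layer_cake[OF sets P _ dG_meas]) simp
  then show ?thesis by (simp add: Pt_em GG_nn)
qed


lemma Tp_fin: "(\<integral>\<^sup>+y. ennreal (Pt y) * indicator {0<..} y \<partial>lborel) < \<infinity>"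
proof -
  have [measurable]: "Pt \<in> borel_measurable borel" by (rule Pt_meas)
  have "(\<integral>\<^sup>+y. ennreal (Pt y) * indicator {0<..} y \<partial>lborel)
     \<le> (\<integral>\<^sup>+y. indicator {0<..<Y} y + ennreal (c + e) * (ennreal (y powr (-\<alpha>)) * indicator {Y..} y) \<partial>lborel)"
  proof (rule nn_integral_mono)
    fix y :: real
    show "ennreal (Pt y) * indicator {0<..} y \<le> indicator {0<..<Y} y + ennreal (c + e) * (ennreal (y powr (-\<alpha>)) * indicator {Y..} y)"
    proof (cases "y \<le> 0")
      case True then show ?thesis by simp
    next
      case False
      show ?thesis
      proof (cases "y < Y")
        case True
        then show ?thesis using False Pt_01[of y] by (simp add: indicator_def)
      next
        case nY: False
        then have "Pt y \<le> (c + e) * y powr (-\<alpha>)" using Pt_tail2 by simp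
        then have "ennreal (Pt y) \<le> ennreal ((c + e) * y powr (-\<alpha>))" by (rule ennreal_leI)
        also have "\<dots> = ennreal (c + e) * ennreal (y powr (-\<alpha>))" using c0 e0 by (intro ennreal_mult) auto
        finally show ?thesis using nY False by (simp add: indicator_def)
      qed
    qed
  qed
  also have "\<dots> = (\<integral>\<^sup>+y. indicator {0<..<Y} y \<partial>lborel) + ennreal (c + e) * (\<integral>\<^sup>+y. ennreal (y powr (-\<alpha>)) * indicator {Y..} y \<partial>lborel)"
    by (subst nn_integral_add) (auto simp: nn_integral_cmult)
  also have "\<dots> = ennreal Y + ennreal (c + e) * ennreal (Y powr (1-\<alpha>)/(\<alpha>-1))"
    using powr_tail[OF Y0 a1] Y0 by simp
  also have "\<dots> < \<infinity>" by (simp add: ennreal_mult_less_top)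
  finally show ?thesis .
qed

lemma int_Tp: "integrable M (\<lambda>z. max (z - x) 0)"
proof (rule integrableI_bounded)
  show "(\<lambda>z. max (z - x) 0) \<in> borel_measurable M" by (rule measM) measurable
  have "(\<integral>\<^sup>+z. ennreal (norm (max (z - x) 0)) \<partial>M) = (\<integral>\<^sup>+z. ennreal (max (z - x) 0) \<partial>M)"
    by (intro nn_integral_cong) simp
  also have "\<dots> < \<infinity>" using LC_Tp Tp_fin by simp
  finally show "(\<integral>\<^sup>+z. ennreal (norm (max (z - x) 0)) \<partial>M) < \<infinity>" .
qed

lemma int_Tn: "integrable M (\<lambda>z. max (x - z) 0)"
proof -
  interpret prob_space M by (rule P)
  show ?thesis
  proof (rule integrable_const_bound[where B=x])
    show "AE z in M. norm (max (x - z) 0) \<le> x" using nonneg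
      by (rule AE_mp) (rule AE_I2, use x2 in auto)
    show "(\<lambda>z. max (x - z) 0) \<in> borel_measurable M" by (rule measM) measurable
  qed
qed

lemma int_z: "integrable M (\<lambda>z. z)"
proof -
  interpret prob_space M by (rule P)
  have "integrable M (\<lambda>z. x + max (z - x) 0 - max (x - z) 0)"
    using int_Tp int_Tn by auto
  moreover have "(\<lambda>z. x + max (z - x) 0 - max (x - z) 0) = (\<lambda>z. z)" by (auto simp: max_def)
  ultimately show ?thesis by simp
qed

definition MIr where "MIr = \<bar>\<nu>\<bar>*\<bar>\<nu>-1\<bar>/(\<alpha>-1) * (x powr (\<nu>-\<alpha>) * Beta (2-\<alpha>) (\<alpha>-\<nu>))"
definition CY where "CY = Y powr 2 / 2 + c * (Y powr (2-\<alpha>) / (2-\<alpha>))"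
definition Rr where "Rr = e * MIr + \<bar>\<nu>\<bar>*\<bar>\<nu>-1\<bar>*x powr (\<nu>-2) * CY"

lemma MIr_nn: "MIr \<ge> 0"
proof -
  have "Beta (2-\<alpha>) (\<alpha>-\<nu>) > 0" unfolding Beta_def using a2 nuhi by (auto intro!: Gamma_real_pos divide_pos_pos mult_pos_pos)
  then show ?thesis unfolding MIr_def using a1 by (auto intro!: mult_nonneg_nonneg divide_nonneg_nonneg)
qed

lemma CY_nn: "CY \<ge> 0" unfolding CY_def using a2 c0 by (auto intro!: add_nonneg_nonneg mult_nonneg_nonneg divide_nonneg_nonneg)

lemma Rr_nn: "Rr \<ge> 0" unfolding Rr_def using MIr_nn CY_nn e0 by (auto intro!: add_nonneg_nonneg mult_nonneg_nonneg)

lemma MI_x: "(\<integral>\<^sup>+y. ennreal (\<bar>dG \<nu> x y\<bar> * y powr (-\<alpha>)) * indicator {0<..} y \<partial>lborel) = ennreal MIr"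
  unfolding MIr_def by (rule MI) (use x2 a1 a2 nuhi in auto)

lemma IY: "(\<integral>\<^sup>+y. ennreal (y powr 1 + c * y powr (1-\<alpha>)) * indicator {0<..<Y} y \<partial>lborel) = ennreal CY"
proof -
  have h1: "((\<lambda>y. y powr 1) has_integral (Y powr (1+1) / (1+1))) {0..Y}"
    by (rule has_integral_powr_from_0) (use Y0 in auto)
  have h2: "((\<lambda>y. y powr (1-\<alpha>)) has_integral (Y powr ((1-\<alpha>)+1) / ((1-\<alpha>)+1))) {0..Y}"
    by (rule has_integral_powr_from_0) (use Y0 a2 in auto)
  have "((\<lambda>y. y powr 1 + c * y powr (1-\<alpha>)) has_integral (Y powr (1+1) / (1+1) + c * (Y powr ((1-\<alpha>)+1) / ((1-\<alpha>)+1)))) {0..Y}"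
    by (intro has_integral_add has_integral_mult_right h1 h2)
  then have "((\<lambda>y. y powr 1 + c * y powr (1-\<alpha>)) has_integral CY) {0<..<Y}"
    unfolding CY_def by (simp add: has_integral_Icc_iff_Ioo add.commute)
  then show ?thesis by (rule nn_integral_has_integral_lebesgue'[rotated]) (use c0 in auto)
qed

lemma Err_bound:
  "(\<integral>\<^sup>+y. ennreal (\<bar>dG \<nu> x y\<bar> * \<bar>Pt y - c * y powr (-\<alpha>)\<bar>) * indicator {0<..} y \<partial>lborel) \<le> ennreal Rr"
proof -
  have [measurable]: "Pt \<in> borel_measurable borel" by (rule Pt_meas)
  have [measurable]: "(\<lambda>y. \<bar>dG \<nu> x y\<bar>) \<in> borel_measurable borel" by (rule dG_meas)
  define K where "K = \<bar>\<nu>\<bar>*\<bar>\<nu>-1\<bar>*x powr (\<nu>-2)"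
  have K0: "K \<ge> 0" by (simp add: K_def)
  have pw: "\<bar>dG \<nu> x y\<bar> * \<bar>Pt y - c * y powr (-\<alpha>)\<bar> \<le> e * (\<bar>dG \<nu> x y\<bar> * y powr (-\<alpha>)) + K * ((y powr 1 + c * y powr (1-\<alpha>)) * indicator {0<..<Y} y)"
    if y: "y > 0" for y
  proof (cases "y < Y")
    case False
    have "\<bar>dG \<nu> x y\<bar> * \<bar>Pt y - c * y powr (-\<alpha>)\<bar> \<le> \<bar>dG \<nu> x y\<bar> * (e * y powr (-\<alpha>))"
      by (rule mult_left_mono) (use Pt_tail[of y] False in auto)
    then show ?thesis using False K0 by (simp add: indicator_def mult_ac)
  next
    case True
    have a: "\<bar>Pt y - c * y powr (-\<alpha>)\<bar> \<le> 1 + c * y powr (-\<alpha>)"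
    proof -
      have "c * y powr (-\<alpha>) \<ge> 0" using c0 by simp
      then show ?thesis using Pt_01[of y] by (simp add: abs_le_iff)
    qed
    have b: "\<bar>dG \<nu> x y\<bar> \<le> K * y" unfolding K_def by (rule dG_bound) (use x2 y nuhi a2 in auto)
    have "\<bar>dG \<nu> x y\<bar> * \<bar>Pt y - c * y powr (-\<alpha>)\<bar> \<le> (K * y) * (1 + c * y powr (-\<alpha>))"
      by (rule mult_mono[OF b a]) (use K0 y in auto)
    also have "\<dots> = K * (y powr 1 + c * (y * y powr (-\<alpha>)))" using y by (simp add: algebra_simps)
    also have "y * y powr (-\<alpha>) = y powr (1-\<alpha>)"
    proof -
      have "y powr (1-\<alpha>) = y powr (1 + (-\<alpha>))" by simp
      also have "\<dots> = y powr 1 * y powr (-\<alpha>)" by (rule powr_add)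
      finally show ?thesis using y by simp
    qed
    finally have "\<bar>dG \<nu> x y\<bar> * \<bar>Pt y - c * y powr (-\<alpha>)\<bar> \<le> K * (y powr 1 + c * y powr (1-\<alpha>))" .
    moreover have "0 \<le> e * (\<bar>dG \<nu> x y\<bar> * y powr (-\<alpha>))" using e0 by simp
    ultimately show ?thesis using True y by (simp add: indicator_def)
  qed
  have "(\<integral>\<^sup>+y. ennreal (\<bar>dG \<nu> x y\<bar> * \<bar>Pt y - c * y powr (-\<alpha>)\<bar>) * indicator {0<..} y \<partial>lborel)
      \<le> (\<integral>\<^sup>+y. ennreal e * (ennreal (\<bar>dG \<nu> x y\<bar> * y powr (-\<alpha>)) * indicator {0<..} y)
             + ennreal K * (ennreal (y powr 1 + c * y powr (1-\<alpha>)) * indicator {0<..<Y} y) \<partial>lborel)"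
  proof (rule nn_integral_mono)
    fix y :: real
    show "ennreal (\<bar>dG \<nu> x y\<bar> * \<bar>Pt y - c * y powr (-\<alpha>)\<bar>) * indicator {0<..} y
      \<le> ennreal e * (ennreal (\<bar>dG \<nu> x y\<bar> * y powr (-\<alpha>)) * indicator {0<..} y)
             + ennreal K * (ennreal (y powr 1 + c * y powr (1-\<alpha>)) * indicator {0<..<Y} y)"
    proof (cases "y > 0")
      case False then show ?thesis by simp
    next
      case True
      have n1: "0 \<le> e * (\<bar>dG \<nu> x y\<bar> * y powr (-\<alpha>))" using e0 by simp
      have n2: "0 \<le> K * ((y powr 1 + c * y powr (1-\<alpha>)) * indicator {0<..<Y} y)"
        using K0 c0 by (intro mult_nonneg_nonneg) auto
      have "ennreal (\<bar>dG \<nu> x y\<bar> * \<bar>Pt y - c * y powr (-\<alpha>)\<bar>)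
          \<le> ennreal (e * (\<bar>dG \<nu> x y\<bar> * y powr (-\<alpha>)) + K * ((y powr 1 + c * y powr (1-\<alpha>)) * indicator {0<..<Y} y))"
        by (rule ennreal_leI[OF pw[OF True]])
      also have "\<dots> = ennreal (e * (\<bar>dG \<nu> x y\<bar> * y powr (-\<alpha>))) + ennreal (K * ((y powr 1 + c * y powr (1-\<alpha>)) * indicator {0<..<Y} y))"
        by (rule ennreal_plus[OF n1 n2])
      also have "ennreal (e * (\<bar>dG \<nu> x y\<bar> * y powr (-\<alpha>))) = ennreal e * ennreal (\<bar>dG \<nu> x y\<bar> * y powr (-\<alpha>))"
        using e0 by (intro ennreal_mult) auto
      also have "ennreal (K * ((y powr 1 + c * y powr (1-\<alpha>)) * indicator {0<..<Y} y))
               = ennreal K * (ennreal (y powr 1 + c * y powr (1-\<alpha>)) * indicator {0<..<Y} y)"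
        using K0 c0 by (simp add: ennreal_mult indicator_def)
      finally show ?thesis using True by simp
    qed
  qed
  also have "\<dots> = ennreal e * (\<integral>\<^sup>+y. ennreal (\<bar>dG \<nu> x y\<bar> * y powr (-\<alpha>)) * indicator {0<..} y \<partial>lborel)
                + ennreal K * (\<integral>\<^sup>+y. ennreal (y powr 1 + c * y powr (1-\<alpha>)) * indicator {0<..<Y} y \<partial>lborel)"
    by (subst nn_integral_add) (auto simp: nn_integral_cmult)
  also have "\<dots> = ennreal e * ennreal MIr + ennreal K * ennreal CY" by (simp only: MI_x IY)
  also have "\<dots> = ennreal Rr"
    using e0 K0 MIr_nn CY_nn by (simp add: Rr_def K_def ennreal_mult[symmetric] mult.assoc)
  finally show ?thesis .
qed


lemma A1_close: "\<exists>a1. (\<integral>\<^sup>+y. ennreal \<bar>dG \<nu> x y\<bar> * indicator {0<..} y * ennreal (Pt y) \<partial>lborel) = ennreal a1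
    \<and> 0 \<le> a1 \<and> \<bar>a1 - c * MIr\<bar> \<le> Rr"
proof -
  have [measurable]: "Pt \<in> borel_measurable borel" by (rule Pt_meas)
  have [measurable]: "(\<lambda>y. \<bar>dG \<nu> x y\<bar>) \<in> borel_measurable borel" by (rule dG_meas)
  define A1 where "A1 = (\<integral>\<^sup>+y. ennreal \<bar>dG \<nu> x y\<bar> * indicator {0<..} y * ennreal (Pt y) \<partial>lborel)"
  define E where "E = (\<integral>\<^sup>+y. ennreal (\<bar>dG \<nu> x y\<bar> * \<bar>Pt y - c * y powr (-\<alpha>)\<bar>) * indicator {0<..} y \<partial>lborel)"
  have E: "E \<le> ennreal Rr" unfolding E_def by (rule Err_bound)
  have cM: "0 \<le> c * MIr" using c0 MIr_nn by simp
  have "A1 \<le> (\<integral>\<^sup>+y. ennreal c * (ennreal (\<bar>dG \<nu> x y\<bar> * y powr (-\<alpha>)) * indicator {0<..} y)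
       + ennreal (\<bar>dG \<nu> x y\<bar> * \<bar>Pt y - c * y powr (-\<alpha>)\<bar>) * indicator {0<..} y \<partial>lborel)"
    unfolding A1_def
  proof (rule nn_integral_mono)
    fix y :: real
    show "ennreal \<bar>dG \<nu> x y\<bar> * indicator {0<..} y * ennreal (Pt y)
      \<le> ennreal c * (ennreal (\<bar>dG \<nu> x y\<bar> * y powr (-\<alpha>)) * indicator {0<..} y)
       + ennreal (\<bar>dG \<nu> x y\<bar> * \<bar>Pt y - c * y powr (-\<alpha>)\<bar>) * indicator {0<..} y"
    proof (cases "y > 0")
      case False then show ?thesis by simp
    next
      case True
      have r: "\<bar>dG \<nu> x y\<bar> * Pt y \<le> c * (\<bar>dG \<nu> x y\<bar> * y powr (-\<alpha>)) + \<bar>dG \<nu> x y\<bar> * \<bar>Pt y - c * y powr (-\<alpha>)\<bar>"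
      proof -
        have "Pt y \<le> c * y powr (-\<alpha>) + \<bar>Pt y - c * y powr (-\<alpha>)\<bar>" by simp
        then have "\<bar>dG \<nu> x y\<bar> * Pt y \<le> \<bar>dG \<nu> x y\<bar> * (c * y powr (-\<alpha>) + \<bar>Pt y - c * y powr (-\<alpha>)\<bar>)"
          by (rule mult_left_mono) simp
        then show ?thesis by (simp add: algebra_simps)
      qed
      have "ennreal \<bar>dG \<nu> x y\<bar> * ennreal (Pt y) = ennreal (\<bar>dG \<nu> x y\<bar> * Pt y)"
        by (rule ennreal_mult[symmetric]) (use Pt_01 in auto)
      also have "\<dots> \<le> ennreal (c * (\<bar>dG \<nu> x y\<bar> * y powr (-\<alpha>)) + \<bar>dG \<nu> x y\<bar> * \<bar>Pt y - c * y powr (-\<alpha>)\<bar>)"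
        by (rule ennreal_leI[OF r])
      also have "\<dots> = ennreal c * ennreal (\<bar>dG \<nu> x y\<bar> * y powr (-\<alpha>)) + ennreal (\<bar>dG \<nu> x y\<bar> * \<bar>Pt y - c * y powr (-\<alpha>)\<bar>)"
        using c0 by (simp add: ennreal_mult)
      finally show ?thesis using True by simp
    qed
  qed
  also have "\<dots> = ennreal c * (\<integral>\<^sup>+y. ennreal (\<bar>dG \<nu> x y\<bar> * y powr (-\<alpha>)) * indicator {0<..} y \<partial>lborel) + E"
    unfolding E_def by (subst nn_integral_add) (auto simp: nn_integral_cmult)
  also have "\<dots> = ennreal (c * MIr) + E" unfolding MI_x using c0 MIr_nn by (simp add: ennreal_mult)
  also have "\<dots> \<le> ennreal (c * MIr) + ennreal Rr" using E by (rule add_left_mono)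
  also have "\<dots> = ennreal (c * MIr + Rr)" using cM Rr_nn by simp
  finally have up: "A1 \<le> ennreal (c * MIr + Rr)" .
  then have fin: "A1 < \<infinity>" using top.not_eq_extremum by (auto simp: order_le_less_trans)
  define a1 where "a1 = enn2real A1"
  have A1a: "A1 = ennreal a1" unfolding a1_def using fin by simp
  have a10: "0 \<le> a1" by (simp add: a1_def)
  have u0: "ennreal a1 \<le> ennreal (c * MIr + Rr)" using up unfolding A1a .
  have u: "a1 \<le> c * MIr + Rr" using ennreal_le_iff[THEN iffD1, OF _ u0] cM Rr_nn by simp
  have "ennreal (c * MIr) = ennreal c * (\<integral>\<^sup>+y. ennreal (\<bar>dG \<nu> x y\<bar> * y powr (-\<alpha>)) * indicator {0<..} y \<partial>lborel)"
    unfolding MI_x using c0 MIr_nn by (simp add: ennreal_mult)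
  also have "\<dots> = (\<integral>\<^sup>+y. ennreal c * (ennreal (\<bar>dG \<nu> x y\<bar> * y powr (-\<alpha>)) * indicator {0<..} y) \<partial>lborel)"
    by (subst nn_integral_cmult) auto
  also have "\<dots> \<le> (\<integral>\<^sup>+y. ennreal \<bar>dG \<nu> x y\<bar> * indicator {0<..} y * ennreal (Pt y)
       + ennreal (\<bar>dG \<nu> x y\<bar> * \<bar>Pt y - c * y powr (-\<alpha>)\<bar>) * indicator {0<..} y \<partial>lborel)"
  proof (rule nn_integral_mono)
    fix y :: real
    show "ennreal c * (ennreal (\<bar>dG \<nu> x y\<bar> * y powr (-\<alpha>)) * indicator {0<..} y)
        \<le> ennreal \<bar>dG \<nu> x y\<bar> * indicator {0<..} y * ennreal (Pt y)
       + ennreal (\<bar>dG \<nu> x y\<bar> * \<bar>Pt y - c * y powr (-\<alpha>)\<bar>) * indicator {0<..} y"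
    proof (cases "y > 0")
      case False then show ?thesis by simp
    next
      case True
      have r: "c * (\<bar>dG \<nu> x y\<bar> * y powr (-\<alpha>)) \<le> \<bar>dG \<nu> x y\<bar> * Pt y + \<bar>dG \<nu> x y\<bar> * \<bar>Pt y - c * y powr (-\<alpha>)\<bar>"
      proof -
        have "c * y powr (-\<alpha>) \<le> Pt y + \<bar>Pt y - c * y powr (-\<alpha>)\<bar>" by simp
        then have "\<bar>dG \<nu> x y\<bar> * (c * y powr (-\<alpha>)) \<le> \<bar>dG \<nu> x y\<bar> * (Pt y + \<bar>Pt y - c * y powr (-\<alpha>)\<bar>)"
          by (rule mult_left_mono) simp
        then show ?thesis by (simp add: algebra_simps)
      qed
      have "ennreal c * ennreal (\<bar>dG \<nu> x y\<bar> * y powr (-\<alpha>)) = ennreal (c * (\<bar>dG \<nu> x y\<bar> * y powr (-\<alpha>)))"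
        using c0 by (simp add: ennreal_mult)
      also have "\<dots> \<le> ennreal (\<bar>dG \<nu> x y\<bar> * Pt y + \<bar>dG \<nu> x y\<bar> * \<bar>Pt y - c * y powr (-\<alpha>)\<bar>)"
        by (rule ennreal_leI[OF r])
      also have "\<dots> = ennreal \<bar>dG \<nu> x y\<bar> * ennreal (Pt y) + ennreal (\<bar>dG \<nu> x y\<bar> * \<bar>Pt y - c * y powr (-\<alpha>)\<bar>)"
        using Pt_01[of y] by (simp add: ennreal_mult)
      finally show ?thesis using True by simp
    qed
  qed
  also have "\<dots> = A1 + E"
    unfolding A1_def E_def by (subst nn_integral_add) auto
  also have "\<dots> \<le> ennreal a1 + ennreal Rr" using E A1a by simp
  also have "\<dots> = ennreal (a1 + Rr)" using a10 Rr_nn by simp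
  finally have "ennreal (c * MIr) \<le> ennreal (a1 + Rr)" .
  moreover have "0 \<le> a1 + Rr" using a10 Rr_nn by simp
  ultimately have "c * MIr \<le> a1 + Rr" using ennreal_le_iff by blast
  with u have "\<bar>a1 - c * MIr\<bar> \<le> Rr" by linarith
  with A1a a10 show ?thesis unfolding A1_def by blast
qed


lemma Hp_meas: "(\<lambda>z. GG \<nu> x (max (z - x) 0)) \<in> borel_measurable M"
  by (rule measM) (unfold GG_def, measurable)

lemma Hp_props: "integrable M (\<lambda>z. GG \<nu> x (max (z - x) 0))"
  "\<bar>(\<integral>z. GG \<nu> x (max (z - x) 0) \<partial>M) - c * \<nu> * x powr (\<nu>-\<alpha>) * kappa0 \<alpha> \<nu>\<bar> \<le> Rr"
proof -
  obtain a1 where A: "(\<integral>\<^sup>+y. ennreal \<bar>dG \<nu> x y\<bar> * indicator {0<..} y * ennreal (Pt y) \<partial>lborel) = ennreal a1"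
    "0 \<le> a1" "\<bar>a1 - c * MIr\<bar> \<le> Rr" using A1_close by blast
  have nnH: "(\<integral>\<^sup>+z. ennreal \<bar>GG \<nu> x (max (z - x) 0)\<bar> \<partial>M) = ennreal a1" using LC_GG A(1) by simp
  have mabs: "(\<lambda>z. \<bar>GG \<nu> x (max (z - x) 0)\<bar>) \<in> borel_measurable M" using Hp_meas by measurable
  show I: "integrable M (\<lambda>z. GG \<nu> x (max (z - x) 0))"
  proof (rule integrableI_bounded[OF Hp_meas])
    show "(\<integral>\<^sup>+z. ennreal (norm (GG \<nu> x (max (z - x) 0))) \<partial>M) < \<infinity>" using nnH by simp
  qed
  have absint: "(\<integral>z. \<bar>GG \<nu> x (max (z - x) 0)\<bar> \<partial>M) = a1"
    using integral_eq_nn_integral[OF mabs] nnH A(2) by simp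
  have eq: "GG \<nu> x (max (z - x) 0) = sg \<nu> * \<bar>GG \<nu> x (max (z - x) 0)\<bar>" for z
  proof -
    have "\<bar>GG \<nu> x (max (z - x) 0)\<bar> = sg \<nu> * GG \<nu> x (max (z - x) 0)"
      by (rule GG_sign) (use x2 in auto)
    then have "sg \<nu> * \<bar>GG \<nu> x (max (z - x) 0)\<bar> = (sg \<nu> * sg \<nu>) * GG \<nu> x (max (z - x) 0)" by simp
    then show ?thesis by (simp add: sg_abs)
  qed
  have "(\<integral>z. GG \<nu> x (max (z - x) 0) \<partial>M) = (\<integral>z. sg \<nu> * \<bar>GG \<nu> x (max (z - x) 0)\<bar> \<partial>M)"
    by (subst eq) simp
  also have "\<dots> = sg \<nu> * a1" using absint by simp
  finally have int: "(\<integral>z. GG \<nu> x (max (z - x) 0) \<partial>M) = sg \<nu> * a1" .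
  have id: "sg \<nu> * (c * MIr) = c * \<nu> * x powr (\<nu>-\<alpha>) * kappa0 \<alpha> \<nu>"
  proof -
    have "sg \<nu> * MIr = \<nu> * x powr (\<nu>-\<alpha>) * kappa0 \<alpha> \<nu>"
      unfolding MIr_def by (rule kappa_ident) (use a1 a2 nuhi in auto)
    then show ?thesis by (simp add: algebra_simps)
  qed
  have "\<bar>(\<integral>z. GG \<nu> x (max (z - x) 0) \<partial>M) - c * \<nu> * x powr (\<nu>-\<alpha>) * kappa0 \<alpha> \<nu>\<bar>
       = \<bar>sg \<nu> * (a1 - c * MIr)\<bar>" unfolding int id[symmetric] by (simp add: algebra_simps)
  also have "\<dots> = \<bar>a1 - c * MIr\<bar>" by (simp add: abs_mult sg_abs)
  finally show "\<bar>(\<integral>z. GG \<nu> x (max (z - x) 0) \<partial>M) - c * \<nu> * x powr (\<nu>-\<alpha>) * kappa0 \<alpha> \<nu>\<bar> \<le> Rr"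
    using A(3) by simp
qed


definition Qx where "Qx = x powr (\<nu> - min \<beta> 2) + x powr (-\<beta>) + x powr (\<nu>-\<beta>)"
definition C1 where "C1 = \<bar>\<nu>\<bar>*\<bar>\<nu>-1\<bar>*2 powr (2-\<nu>) + 2 powr \<beta> * (3 + \<bar>\<nu>\<bar>)"
definition Hn where "Hn z = f0 \<nu> z - x powr \<nu> - \<nu> * x powr (\<nu>-1) * (z - x) - GG \<nu> x (max (z - x) 0)"

lemma CQ_nn: "C1 * Qx \<ge> 0" unfolding C1_def Qx_def by (intro mult_nonneg_nonneg add_nonneg_nonneg) auto

lemma Hn_pw: "z \<ge> 0 \<Longrightarrow> \<bar>Hn z\<bar> \<le> C1 * Qx * (1 + (max (x - z) 0) powr \<beta>)"
proof -
  assume z: "z \<ge> 0"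
  show ?thesis
  proof (cases "z \<ge> x")
    case True
    have "f0 \<nu> z = z powr \<nu>" using True x2 by (simp add: f0_def)
    then have "Hn z = 0" using True by (simp add: Hn_def GG_def)
    moreover have "0 \<le> C1 * Qx * (1 + (max (x - z) 0) powr \<beta>)"
      by (rule mult_nonneg_nonneg[OF CQ_nn]) simp
    ultimately show ?thesis by simp
  next
    case False
    then have "Hn z = f0 \<nu> z - x powr \<nu> - \<nu> * x powr (\<nu>-1) * (z - x)" by (simp add: Hn_def)
    moreover have "max (x - z) 0 = x - z" using False by simp
    moreover have "\<bar>f0 \<nu> z - x powr \<nu> - \<nu> * x powr (\<nu>-1) * (z - x)\<bar> \<le> C1 * Qx * (1 + (x - z) powr \<beta>)"
      unfolding C1_def Qx_def by (rule Hn_bound) (use x2 z False nuhi a2 ab a1 in auto)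
    ultimately show ?thesis by simp
  qed
qed

lemma f0_meas: "f0 \<nu> \<in> borel_measurable borel"
  unfolding f0_def[abs_def] by measurable

lemma Hn_meas: "Hn \<in> borel_measurable M"
proof -
  have [measurable]: "f0 \<nu> \<in> borel_measurable borel" by (rule f0_meas)
  show ?thesis unfolding Hn_def[abs_def] by (rule measM) (unfold GG_def, measurable)
qed

lemma Tnb_props: "integrable M (\<lambda>z. (max (x - z) 0) powr \<beta>)" "(\<integral>z. (max (x - z) 0) powr \<beta> \<partial>M) \<le> Mb"
proof -
  have m: "(\<lambda>z. (max (x - z) 0) powr \<beta>) \<in> borel_measurable M" by (rule measM) measurable
  have fin: "(\<integral>\<^sup>+z. ennreal ((max (x - z) 0) powr \<beta>) \<partial>M) < \<infinity>"
    using neg by (simp add: order_le_less_trans)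
  show "integrable M (\<lambda>z. (max (x - z) 0) powr \<beta>)"
  proof (rule integrableI_bounded[OF m])
    show "(\<integral>\<^sup>+z. ennreal (norm ((max (x - z) 0) powr \<beta>)) \<partial>M) < \<infinity>" using fin by simp
  qed
  have "(\<integral>z. (max (x - z) 0) powr \<beta> \<partial>M) = enn2real (\<integral>\<^sup>+z. ennreal ((max (x - z) 0) powr \<beta>) \<partial>M)"
    by (rule integral_eq_nn_integral[OF m]) simp
  also have "\<dots> \<le> enn2real (ennreal Mb)" by (rule enn2real_mono[OF neg]) simp
  also have "\<dots> = Mb" using Mb0 by simp
  finally show "(\<integral>z. (max (x - z) 0) powr \<beta> \<partial>M) \<le> Mb" .
qed

lemma Hn_props: "integrable M Hn" "\<bar>\<integral>z. Hn z \<partial>M\<bar> \<le> C1 * Qx * (1 + Mb)"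
proof -
  interpret prob_space M by (rule P)
  define g where "g z = C1 * Qx * (1 + (max (x - z) 0) powr \<beta>)" for z
  have gi: "integrable M g" unfolding g_def[abs_def] using Tnb_props(1) by auto
  have AEb: "AE z in M. \<bar>Hn z\<bar> \<le> g z" using nonneg
    by (rule AE_mp) (rule AE_I2, auto simp: g_def intro: Hn_pw)
  show HI: "integrable M Hn"
  proof (rule Bochner_Integration.integrable_bound[OF gi Hn_meas])
    show "AE z in M. norm (Hn z) \<le> norm (g z)" using AEb
      by (rule AE_mp) (rule AE_I2, auto simp: g_def)
  qed
  have "\<bar>\<integral>z. Hn z \<partial>M\<bar> \<le> (\<integral>z. \<bar>Hn z\<bar> \<partial>M)" by (rule integral_abs_bound)
  also have "\<dots> \<le> (\<integral>z. g z \<partial>M)"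
    by (rule integral_mono_AE[OF _ gi AEb]) (use HI in auto)
  also have "(\<integral>z. g z \<partial>M) = C1 * Qx * (1 + (\<integral>z. (max (x - z) 0) powr \<beta> \<partial>M))"
    unfolding g_def using Tnb_props(1) by (simp add: prob_space)
  also have "\<dots> \<le> C1 * Qx * (1 + Mb)"
    by (rule mult_left_mono) (use Tnb_props(2) CQ_nn in auto)
  finally show "\<bar>\<integral>z. Hn z \<partial>M\<bar> \<le> C1 * Qx * (1 + Mb)" .
qed

lemma per_x: "integrable M (f0 \<nu>)" "integrable M (\<lambda>z. z - x)"
  "\<bar>(\<integral>z. f0 \<nu> z \<partial>M) - x powr \<nu> - \<nu> * x powr (\<nu>-1) * (\<integral>z. z - x \<partial>M)
     - c * \<nu> * x powr (\<nu>-\<alpha>) * kappa0 \<alpha> \<nu>\<bar> \<le> Rr + C1 * Qx * (1 + Mb)"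
proof -
  interpret prob_space M by (rule P)
  have zi: "integrable M (\<lambda>z. z - x)" using int_z by auto
  then show "integrable M (\<lambda>z. z - x)" .
  have dec: "f0 \<nu> = (\<lambda>z. GG \<nu> x (max (z - x) 0) + Hn z + x powr \<nu> + \<nu> * x powr (\<nu>-1) * (z - x))"
    by (rule ext) (simp add: Hn_def)
  have i1: "integrable M (\<lambda>z. GG \<nu> x (max (z - x) 0) + Hn z)"
    by (rule Bochner_Integration.integrable_add[OF Hp_props(1) Hn_props(1)])
  have i2: "integrable M (\<lambda>z. \<nu> * x powr (\<nu>-1) * (z - x))" using zi by simp
  have i3: "integrable M (\<lambda>z. GG \<nu> x (max (z - x) 0) + Hn z + x powr \<nu>)" using i1 by simp
  show "integrable M (f0 \<nu>)" unfolding dec by (rule Bochner_Integration.integrable_add[OF i3 i2])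
  have "(\<integral>z. f0 \<nu> z \<partial>M) = (\<integral>z. GG \<nu> x (max (z - x) 0) + Hn z + x powr \<nu> \<partial>M) + (\<integral>z. \<nu> * x powr (\<nu>-1) * (z - x) \<partial>M)"
    unfolding dec by (rule Bochner_Integration.integral_add[OF i3 i2])
  also have "(\<integral>z. GG \<nu> x (max (z - x) 0) + Hn z + x powr \<nu> \<partial>M) = (\<integral>z. GG \<nu> x (max (z - x) 0) + Hn z \<partial>M) + x powr \<nu>"
    using i1 by (simp add: prob_space)
  also have "(\<integral>z. GG \<nu> x (max (z - x) 0) + Hn z \<partial>M) = (\<integral>z. GG \<nu> x (max (z - x) 0) \<partial>M) + (\<integral>z. Hn z \<partial>M)"
    by (rule Bochner_Integration.integral_add[OF Hp_props(1) Hn_props(1)])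
  also have "(\<integral>z. \<nu> * x powr (\<nu>-1) * (z - x) \<partial>M) = \<nu> * x powr (\<nu>-1) * (\<integral>z. z - x \<partial>M)"
    by simp
  finally have eq: "(\<integral>z. f0 \<nu> z \<partial>M) - x powr \<nu> - \<nu> * x powr (\<nu>-1) * (\<integral>z. z - x \<partial>M)
      - c * \<nu> * x powr (\<nu>-\<alpha>) * kappa0 \<alpha> \<nu>
    = ((\<integral>z. GG \<nu> x (max (z - x) 0) \<partial>M) - c * \<nu> * x powr (\<nu>-\<alpha>) * kappa0 \<alpha> \<nu>) + (\<integral>z. Hn z \<partial>M)"
    by simp
  show "\<bar>(\<integral>z. f0 \<nu> z \<partial>M) - x powr \<nu> - \<nu> * x powr (\<nu>-1) * (\<integral>z. z - x \<partial>M)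
     - c * \<nu> * x powr (\<nu>-\<alpha>) * kappa0 \<alpha> \<nu>\<bar> \<le> Rr + C1 * Qx * (1 + Mb)"
    unfolding eq using Hp_props(2) Hn_props(2) by linarith
qed


lemma per_x_explicit:
  "\<bar>(\<integral>z. f0 \<nu> z \<partial>M) - x powr \<nu> - \<nu> * x powr (\<nu>-1) * (\<integral>z. z - x \<partial>M)
     - c * \<nu> * x powr (\<nu>-\<alpha>) * kappa0 \<alpha> \<nu>\<bar> \<le>
   e * (\<bar>\<nu>\<bar>*\<bar>\<nu>-1\<bar>/(\<alpha>-1) * (x powr (\<nu>-\<alpha>) * Beta (2-\<alpha>) (\<alpha>-\<nu>)))
   + \<bar>\<nu>\<bar>*\<bar>\<nu>-1\<bar>*x powr (\<nu>-2) * (Y powr 2 / 2 + c * (Y powr (2-\<alpha>) / (2-\<alpha>)))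
   + (\<bar>\<nu>\<bar>*\<bar>\<nu>-1\<bar>*2 powr (2-\<nu>) + 2 powr \<beta> * (3 + \<bar>\<nu>\<bar>))
     * (x powr (\<nu> - min \<beta> 2) + x powr (-\<beta>) + x powr (\<nu>-\<beta>)) * (1 + Mb)"
  using per_x(3) unfolding Rr_def MIr_def CY_def C1_def Qx_def .

end

lemma pow_small:
  fixes p q \<delta> :: real
  assumes "p < q" "\<delta> > 0"
  shows "eventually (\<lambda>x. x powr p \<le> \<delta> * x powr q) at_top"
proof -
  have "((\<lambda>x::real. x powr (p - q)) \<longlongrightarrow> 0) at_top"
    using assms by (intro tendsto_neg_powr filterlim_ident) auto
  then have "eventually (\<lambda>x::real. x powr (p - q) < \<delta>) at_top"
    using assms(2) by (rule order_tendstoD)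
  moreover have "eventually (\<lambda>x::real. x > 0) at_top" by (rule eventually_gt_at_top)
  ultimately show ?thesis
  proof eventually_elim
    case (elim x)
    have "x powr p = x powr (p - q) * x powr q" using elim by (simp add: powr_add[symmetric])
    also have "\<dots> \<le> \<delta> * x powr q" by (rule mult_right_mono) (use elim in auto)
    finally show ?case .
  qed
qed

lemma scal:
  fixes B u v \<epsilon> :: real
  assumes "0 \<le> B" "0 \<le> u" "0 < \<epsilon>" "v \<le> \<epsilon> / (B + 1) * u"
  shows "B * v \<le> \<epsilon> * u"
proof -
  have "B * v \<le> B * (\<epsilon> / (B + 1) * u)" by (rule mult_left_mono) (use assms in auto)
  also have "\<dots> = (B / (B + 1)) * (\<epsilon> * u)" by simp
  also have "\<dots> \<le> 1 * (\<epsilon> * u)"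
    by (rule mult_right_mono) (use assms in auto)
  finally show ?thesis by simp
qed

lemma pow_small2:
  fixes p q B \<epsilon> :: real
  assumes "p < q" "0 \<le> B" "0 < \<epsilon>"
  shows "eventually (\<lambda>x. B * x powr p \<le> \<epsilon> * x powr q) at_top"
proof -
  have "eventually (\<lambda>x. x powr p \<le> \<epsilon> / (B + 1) * x powr q) at_top"
    by (rule pow_small) (use assms in auto)
  then show ?thesis
    by eventually_elim (rule scal, use assms in auto)
qed

theorem lemma4p2:
  fixes X :: "real set" and K :: "real \<Rightarrow> real measure"
    and \<alpha> \<beta> c x0 \<nu> :: real
  assumes X_nonneg: "X \<subseteq> {0..}"
    and X_meas: "X \<in> sets borel"
    and K_sets: "\<And>x. x \<in> X \<Longrightarrow> sets (K x) = sets borel"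
    and K_prob: "\<And>x. x \<in> X \<Longrightarrow> prob_space (K x)"
    and K_X: "\<And>x. x \<in> X \<Longrightarrow> measure (K x) X = 1"
    and T: "cond_T X K \<alpha> \<beta> c x0"
    and nu_lo: "\<alpha> - \<beta> < \<nu>" and nu_hi: "\<nu> < \<alpha>"
  shows "(\<lambda>x. D0 K \<nu> x - \<nu> * x powr (\<nu> - 1) * mean_incr K x
               - c * \<nu> * x powr (\<nu> - \<alpha>) * kappa0 \<alpha> \<nu>)
         \<in> o[at_top \<sqinter> principal X](\<lambda>x. x powr (\<nu> - \<alpha>))"
proof -
  from T have a1: "1 < \<alpha>" and a2: "\<alpha> < 2" and ab: "\<beta> > \<alpha>" and c0: "c > 0" and x00: "x0 \<ge> 0"
    and tailT: "\<forall>\<epsilon>>0. \<exists>Y. \<forall>y\<ge>Y. \<forall>x\<in>X. x \<ge> x0 \<longrightarrow>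
        \<bar>y powr \<alpha> * measure (K x) {z. max (z - x) 0 > y} - c\<bar> \<le> \<epsilon>"
    and supT: "(SUP x\<in>{x\<in>X. x \<ge> x0}. \<integral>\<^sup>+ z. ennreal ((max (x - z) 0) powr \<beta>) \<partial>K x) < \<infinity>"
    unfolding cond_T_def by blast+
  define Bs where "Bs = (SUP x\<in>{x\<in>X. x \<ge> x0}. \<integral>\<^sup>+ z. ennreal ((max (x - z) 0) powr \<beta>) \<partial>K x)"
  define Mb where "Mb = enn2real Bs"
  have Mb0: "Mb \<ge> 0" by (simp add: Mb_def)
  have negb: "(\<integral>\<^sup>+ z. ennreal ((max (x - z) 0) powr \<beta>) \<partial>K x) \<le> ennreal Mb" if "x \<in> X" "x \<ge> x0" for x
  proof -
    have "(\<integral>\<^sup>+ z. ennreal ((max (x - z) 0) powr \<beta>) \<partial>K x) \<le> Bs"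
      unfolding Bs_def by (rule SUP_upper) (use that in auto)
    also have "Bs = ennreal Mb" using supT by (simp add: Mb_def Bs_def)
    finally show ?thesis .
  qed
  define Kc where "Kc = \<bar>\<nu>\<bar>*\<bar>\<nu>-1\<bar>/(\<alpha>-1) * Beta (2-\<alpha>) (\<alpha>-\<nu>)"
  have Kc0: "Kc \<ge> 0"
  proof -
    have "Beta (2-\<alpha>) (\<alpha>-\<nu>) > 0" unfolding Beta_def using a2 nu_hi
      by (auto intro!: Gamma_real_pos divide_pos_pos mult_pos_pos)
    then show ?thesis unfolding Kc_def using a1 by (auto intro!: mult_nonneg_nonneg divide_nonneg_nonneg)
  qed
  show ?thesis
  proof (rule landau_o.smallI)
    fix \<epsilon> :: real assume \<epsilon>: "\<epsilon> > 0"
    define e where "e = \<epsilon> / (3 * (Kc + 1))"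
    have e0: "e > 0" using \<epsilon> Kc0 by (simp add: e_def)
    obtain Y0 where Y0: "\<forall>y\<ge>Y0. \<forall>x\<in>X. x \<ge> x0 \<longrightarrow>
        \<bar>y powr \<alpha> * measure (K x) {z. max (z - x) 0 > y} - c\<bar> \<le> e"
      using tailT e0 by blast
    define Y where "Y = max Y0 1"
    have Ypos: "Y > 0" by (simp add: Y_def)
    define CYv where "CYv = Y powr 2 / 2 + c * (Y powr (2-\<alpha>) / (2-\<alpha>))"
    have CY0: "CYv \<ge> 0" unfolding CYv_def using a2 c0 by (auto intro!: add_nonneg_nonneg mult_nonneg_nonneg divide_nonneg_nonneg)
    define C1v where "C1v = \<bar>\<nu>\<bar>*\<bar>\<nu>-1\<bar>*2 powr (2-\<nu>) + 2 powr \<beta> * (3 + \<bar>\<nu>\<bar>)"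
    have C10: "C1v \<ge> 0" unfolding C1v_def by (intro add_nonneg_nonneg mult_nonneg_nonneg) auto
    define W where "W = C1v * (1 + Mb)"
    have W0: "W \<ge> 0" unfolding W_def using C10 Mb0 by simp
    have ev1: "eventually (\<lambda>x. (\<bar>\<nu>\<bar>*\<bar>\<nu>-1\<bar>*CYv) * x powr (\<nu>-2) \<le> (\<epsilon>/3) * x powr (\<nu>-\<alpha>)) at_top"
      by (rule pow_small2) (use a2 \<epsilon> CY0 in auto)
    have ev2: "eventually (\<lambda>x. W * x powr (\<nu> - min \<beta> 2) \<le> (\<epsilon>/9) * x powr (\<nu>-\<alpha>)) at_top"
      by (rule pow_small2) (use a2 ab \<epsilon> W0 in auto)
    have ev3: "eventually (\<lambda>x. W * x powr (-\<beta>) \<le> (\<epsilon>/9) * x powr (\<nu>-\<alpha>)) at_top"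
      by (rule pow_small2) (use nu_lo \<epsilon> W0 in auto)
    have ev4: "eventually (\<lambda>x. W * x powr (\<nu>-\<beta>) \<le> (\<epsilon>/9) * x powr (\<nu>-\<alpha>)) at_top"
      by (rule pow_small2) (use ab \<epsilon> W0 in auto)
    have ev5: "eventually (\<lambda>x::real. x \<ge> max 2 x0) at_top" by (rule eventually_ge_at_top)
    have "eventually (\<lambda>x. x \<in> X \<longrightarrow> norm (D0 K \<nu> x - \<nu> * x powr (\<nu> - 1) * mean_incr K x
               - c * \<nu> * x powr (\<nu> - \<alpha>) * kappa0 \<alpha> \<nu>) \<le> \<epsilon> * norm (x powr (\<nu> - \<alpha>))) at_top"
      using ev1 ev2 ev3 ev4 ev5
    proof eventually_elim
      case (elim x)
      show ?case
      proof
        assume xX: "x \<in> X"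
        have x2: "x \<ge> 2" and xx0: "x \<ge> x0" using elim(5) by auto
        interpret pK: prob_space "K x" by (rule K_prob[OF xX])
        have AEX: "AE z in K x. z \<in> X" by (rule pK.AE_prob_1) (rule K_X[OF xX])
        have nonneg: "AE z in K x. 0 \<le> z" using AEX
          by (rule AE_mp) (rule AE_I2, use X_nonneg in auto)
        have tl: "\<And>y. y \<ge> Y \<Longrightarrow> \<bar>y powr \<alpha> * measure (K x) {z. max (z - x) 0 > y} - c\<bar> \<le> e"
          using Y0 xX xx0 by (auto simp: Y_def)
        note PXE = per_x_explicit[OF K_sets[OF xX] K_prob[OF xX] nonneg x2 a1 a2 ab c0 nu_lo nu_hi Ypos e0 tl negb[OF xX xx0] Mb0]
        have f0x: "f0 \<nu> x = x powr \<nu>" using x2 by (simp add: f0_def)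
        have eqf: "D0 K \<nu> x - \<nu> * x powr (\<nu> - 1) * mean_incr K x - c * \<nu> * x powr (\<nu> - \<alpha>) * kappa0 \<alpha> \<nu>
          = (\<integral>z. f0 \<nu> z \<partial>K x) - x powr \<nu> - \<nu> * x powr (\<nu>-1) * (\<integral>z. z - x \<partial>K x) - c * \<nu> * x powr (\<nu>-\<alpha>) * kappa0 \<alpha> \<nu>"
          by (simp add: D0_def mean_incr_def f0x)
        have bound: "\<bar>D0 K \<nu> x - \<nu> * x powr (\<nu> - 1) * mean_incr K x - c * \<nu> * x powr (\<nu> - \<alpha>) * kappa0 \<alpha> \<nu>\<bar>
           \<le> e * (Kc * x powr (\<nu>-\<alpha>)) + (\<bar>\<nu>\<bar>*\<bar>\<nu>-1\<bar>*CYv) * x powr (\<nu>-2)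
             + (W * x powr (\<nu> - min \<beta> 2) + W * x powr (-\<beta>) + W * x powr (\<nu>-\<beta>))"
        proof -
          have b0: "\<bar>(\<integral>z. f0 \<nu> z \<partial>K x) - x powr \<nu> - \<nu> * x powr (\<nu>-1) * (\<integral>z. z - x \<partial>K x) - c * \<nu> * x powr (\<nu>-\<alpha>) * kappa0 \<alpha> \<nu>\<bar>
             \<le> e * (\<bar>\<nu>\<bar>*\<bar>\<nu>-1\<bar>/(\<alpha>-1) * (x powr (\<nu>-\<alpha>) * Beta (2-\<alpha>) (\<alpha>-\<nu>)))
   + \<bar>\<nu>\<bar>*\<bar>\<nu>-1\<bar>*x powr (\<nu>-2) * (Y powr 2 / 2 + c * (Y powr (2-\<alpha>) / (2-\<alpha>)))
   + (\<bar>\<nu>\<bar>*\<bar>\<nu>-1\<bar>*2 powr (2-\<nu>) + 2 powr \<beta> * (3 + \<bar>\<nu>\<bar>))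
     * (x powr (\<nu> - min \<beta> 2) + x powr (-\<beta>) + x powr (\<nu>-\<beta>)) * (1 + Mb)" by (rule PXE)
          have beq: "e * (\<bar>\<nu>\<bar>*\<bar>\<nu>-1\<bar>/(\<alpha>-1) * (x powr (\<nu>-\<alpha>) * Beta (2-\<alpha>) (\<alpha>-\<nu>)))
   + \<bar>\<nu>\<bar>*\<bar>\<nu>-1\<bar>*x powr (\<nu>-2) * (Y powr 2 / 2 + c * (Y powr (2-\<alpha>) / (2-\<alpha>)))
   + (\<bar>\<nu>\<bar>*\<bar>\<nu>-1\<bar>*2 powr (2-\<nu>) + 2 powr \<beta> * (3 + \<bar>\<nu>\<bar>))
     * (x powr (\<nu> - min \<beta> 2) + x powr (-\<beta>) + x powr (\<nu>-\<beta>)) * (1 + Mb)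
             = e * (Kc * x powr (\<nu>-\<alpha>)) + (\<bar>\<nu>\<bar>*\<bar>\<nu>-1\<bar>*CYv) * x powr (\<nu>-2)
             + (W * x powr (\<nu> - min \<beta> 2) + W * x powr (-\<beta>) + W * x powr (\<nu>-\<beta>))"
            unfolding Kc_def CYv_def C1v_def W_def
            by (simp add: algebra_simps)
          show ?thesis using b0 by (simp only: beq eqf)
        qed
        have xp: "x powr (\<nu>-\<alpha>) \<ge> 0" by simp
        have t1: "e * (Kc * x powr (\<nu>-\<alpha>)) \<le> (\<epsilon>/3) * x powr (\<nu>-\<alpha>)"
        proof -
          have "e * Kc \<le> \<epsilon>/3"
          proof -
            have "e * Kc = (\<epsilon>/3) * (Kc / (Kc + 1))" using Kc0 by (simp add: e_def field_simps)
            also have "\<dots> \<le> (\<epsilon>/3) * 1" by (rule mult_left_mono) (use Kc0 \<epsilon> in auto)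
            finally show ?thesis by simp
          qed
          then have "(e * Kc) * x powr (\<nu>-\<alpha>) \<le> (\<epsilon>/3) * x powr (\<nu>-\<alpha>)"
            by (rule mult_right_mono[OF _ xp])
          then show ?thesis by (simp only: mult.assoc)
        qed
        have "\<bar>D0 K \<nu> x - \<nu> * x powr (\<nu> - 1) * mean_incr K x - c * \<nu> * x powr (\<nu> - \<alpha>) * kappa0 \<alpha> \<nu>\<bar>
              \<le> \<epsilon> * x powr (\<nu>-\<alpha>)"
          using bound t1 elim(1-4) by linarith
        then show "norm (D0 K \<nu> x - \<nu> * x powr (\<nu> - 1) * mean_incr K x
               - c * \<nu> * x powr (\<nu> - \<alpha>) * kappa0 \<alpha> \<nu>) \<le> \<epsilon> * norm (x powr (\<nu> - \<alpha>))"
          by simp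
      qed
    qed
    then show "eventually (\<lambda>x. norm (D0 K \<nu> x - \<nu> * x powr (\<nu> - 1) * mean_incr K x
               - c * \<nu> * x powr (\<nu> - \<alpha>) * kappa0 \<alpha> \<nu>) \<le> \<epsilon> * norm (x powr (\<nu> - \<alpha>))) (at_top \<sqinter> principal X)"
      by (simp add: eventually_inf_principal)
  qed
qed

end
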